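(* Let $\omega\in\{0,\infty\}$ and let $\Gamma_M$ ($M>0$) be a family of nonatomic routing games on a fixed graph with fixed OD pairs $\mathcal I$, path sets and edge costs $(c_e)_{e\in\mathcal E}$, in which OD pair $i$ has demand $m^i=\lambda^iM$ for fixed constants $\lambda^i>0$ with $\sum_i\lambda^i=1$. Suppose that for every edge $e$ there is $q_e\ge 0$ such that $\lim_{x\to\omega}c_e(x)/x^{q_e}$ is finite and nonzero. Then $\mathrm{PoA}(\Gamma_M)\to 1$ as $M\to\omega$.
   Context: A nonatomic routing game consists of: a finite directed multigraph with edge set $\mathcal E$; a finite set $\mathcal I$ of OD pairs, each $i$ with demand $m^i\ge 0$ and a nonempty finite set $\mathcal P^i$ of paths from its origin to its destination, the $\mathcal P^i$ pairwise disjoint, $\mathcal P=\bigcup_i\mathcal P^i$; and continuous nondecreasing edge costs $c_e:[0,\infty)\to[0,\infty)$. Total inflow $M=\sum_i m^i>0$. Feasible flows: $f\in\mathbb R_+^{\mathcal P}$ with $\sum_{p\in\mathcal P^i}f_p=m^i$; loads $x_e=\sum_{p\ni e}f_p$; path costs $c_p(f)=\sum_{e\in p}c_e(x_e)$. A Wardrop equilibrium is a feasible $f^*$ with $c_p(f^* )\le c_{p'}(f^* )$ whenever $p,p'\in\mathcal P^i$, $f^*_p>0$. Social cost $L(x)=\sum_e x_ec_e(x_e)$; $\mathrm{Opt}$ its minimum over feasible loads, $\mathrm{Eq}=L(x^* )$ at an equilibrium load, $\mathrm{PoA}=\mathrm{Eq}/\mathrm{Opt}$ (assumed $\mathrm{Opt}>0$;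 otherwise $\mathrm{PoA}:=1$). *)

theory Defs
  imports "HOL-Analysis.Analysis"
begin

text \<open>A directed multigraph: edge set E (edges of type 'e), with tail/head maps
  src, tgt into vertices 'v.\<close>

definition is_path ::
  "'e set \<Rightarrow> ('e \<Rightarrow> 'v) \<Rightarrow> ('e \<Rightarrow> 'v) \<Rightarrow> 'v \<Rightarrow> 'v \<Rightarrow> 'e list \<Rightarrow> bool" where
  "is_path E src tgt o' d p \<longleftrightarrow>
     distinct p \<and> set p \<subseteq> E \<and>
     (p = [] \<longrightarrow> o' = d) \<and>
     (p \<noteq> [] \<longrightarrow> src (hd p) = o' \<and> tgt (last p) = d \<and>
        (\<forall>k. Suc k < length p \<longrightarrow> tgt (p ! k) = src (p ! Suc k)))"

definition all_paths :: "'i set \<Rightarrow> ('i \<Rightarrow> 'e list set) \<Rightarrow> 'e list set" where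
  "all_paths I Paths = (\<Union>i\<in>I. Paths i)"

definition load :: "'e list set \<Rightarrow> ('e list \<Rightarrow> real) \<Rightarrow> 'e \<Rightarrow> real" where
  "load P f e = (\<Sum>p\<in>P. if e \<in> set p then f p else 0)"

definition path_cost ::
  "'e list set \<Rightarrow> ('e \<Rightarrow> real \<Rightarrow> real) \<Rightarrow> ('e list \<Rightarrow> real) \<Rightarrow> 'e list \<Rightarrow> real" where
  "path_cost P c f p = (\<Sum>e\<in>set p. c e (load P f e))"

definition feasible ::
  "'i set \<Rightarrow> ('i \<Rightarrow> 'e list set) \<Rightarrow> ('i \<Rightarrow> real) \<Rightarrow> ('e list \<Rightarrow> real) \<Rightarrow> bool" where
  "feasible I Paths m f \<longleftrightarrow>
     (\<forall>p\<in>all_paths I Paths. 0 \<le> f p) \<and> (\<forall>i\<in>I. (\<Sum>p\<in>Paths i. f p) = m i)"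

definition wardrop ::
  "'i set \<Rightarrow> ('i \<Rightarrow> 'e list set) \<Rightarrow> ('e \<Rightarrow> real \<Rightarrow> real) \<Rightarrow> ('i \<Rightarrow> real)
     \<Rightarrow> ('e list \<Rightarrow> real) \<Rightarrow> bool" where
  "wardrop I Paths c m f \<longleftrightarrow> feasible I Paths m f \<and>
     (\<forall>i\<in>I. \<forall>p\<in>Paths i. \<forall>p'\<in>Paths i. 0 < f p \<longrightarrow>
        path_cost (all_paths I Paths) c f p \<le> path_cost (all_paths I Paths) c f p')"

definition social_cost ::
  "'e set \<Rightarrow> 'e list set \<Rightarrow> ('e \<Rightarrow> real \<Rightarrow> real) \<Rightarrow> ('e list \<Rightarrow> real) \<Rightarrow> real" where
  "social_cost E P c f = (\<Sum>e\<in>E. load P f e * c e (load P f e))"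

definition Opt ::
  "'e set \<Rightarrow> 'i set \<Rightarrow> ('i \<Rightarrow> 'e list set) \<Rightarrow> ('e \<Rightarrow> real \<Rightarrow> real) \<Rightarrow> ('i \<Rightarrow> real) \<Rightarrow> real" where
  "Opt E I Paths c m = Inf (social_cost E (all_paths I Paths) c ` {f. feasible I Paths m f})"

text \<open>Equilibrium social cost, evaluated at some Wardrop equilibrium
  (the value is the same for all equilibria).\<close>
definition Eq ::
  "'e set \<Rightarrow> 'i set \<Rightarrow> ('i \<Rightarrow> 'e list set) \<Rightarrow> ('e \<Rightarrow> real \<Rightarrow> real) \<Rightarrow> ('i \<Rightarrow> real) \<Rightarrow> real" where
  "Eq E I Paths c m = social_cost E (all_paths I Paths) c (SOME f. wardrop I Paths c m f)"

definition PoA ::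
  "'e set \<Rightarrow> 'i set \<Rightarrow> ('i \<Rightarrow> 'e list set) \<Rightarrow> ('e \<Rightarrow> real \<Rightarrow> real) \<Rightarrow> ('i \<Rightarrow> real) \<Rightarrow> real" where
  "PoA E I Paths c m =
     (if Opt E I Paths c m > 0 then Eq E I Paths c m / Opt E I Paths c m else 1)"

end

theory Submission
  imports Defs
begin

locale game =
  fixes E :: "'e set" and I :: "'i set" and Paths :: "'i \<Rightarrow> 'e list set"
    and c :: "'e \<Rightarrow> real \<Rightarrow> real"
  assumes finE: "finite E" and finI: "finite I" and neI: "I \<noteq> {}"
    and finP: "\<And>i. i \<in> I \<Longrightarrow> finite (Paths i)"
    and neP: "\<And>i. i \<in> I \<Longrightarrow> Paths i \<noteq> {}"
    and subE: "\<And>i p. i \<in> I \<Longrightarrow> p \<in> Paths i \<Longrightarrow> set p \<subseteq> E"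
    and disj: "\<And>i j. i \<in> I \<Longrightarrow> j \<in> I \<Longrightarrow> i \<noteq> j \<Longrightarrow> Paths i \<inter> Paths j = {}"
    and cont: "\<And>e. e \<in> E \<Longrightarrow> continuous_on {0..} (c e)"
    and monoc: "\<And>e. e \<in> E \<Longrightarrow> mono_on {0..} (c e)"
    and cnonneg: "\<And>e x. e \<in> E \<Longrightarrow> 0 \<le> x \<Longrightarrow> 0 \<le> c e x"
begin

abbreviation "P \<equiv> all_paths I Paths"

lemma finPP: "finite P"
  unfolding all_paths_def using finI finP by auto

lemma P_sub: "p \<in> P \<Longrightarrow> set p \<subseteq> E"
  unfolding all_paths_def using subE by auto

lemma sum_P: "(\<Sum>p\<in>P. g p) = (\<Sum>i\<in>I. \<Sum>p\<in>Paths i. g p)"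
  unfolding all_paths_def
  by (rule sum.UNION_disjoint) (use finI finP disj in auto)

lemma exchange:
  "(\<Sum>e\<in>E. w e * load P f e) = (\<Sum>p\<in>P. f p * (\<Sum>e\<in>set p. w e))"
proof -
  have "(\<Sum>e\<in>E. w e * load P f e) = (\<Sum>e\<in>E. \<Sum>p\<in>P. if e \<in> set p then f p * w e else 0)"
    unfolding load_def by (simp add: sum_distrib_left if_distrib mult.commute cong: if_cong)
  also have "\<dots> = (\<Sum>p\<in>P. \<Sum>e\<in>E. if e \<in> set p then f p * w e else 0)"
    by (rule sum.swap)
  also have "\<dots> = (\<Sum>p\<in>P. f p * (\<Sum>e\<in>set p. w e))"
  proof (rule sum.cong)
    fix p assume "p \<in> P"
    hence "set p \<subseteq> E" by (rule P_sub)
    hence "(\<Sum>e\<in>E. if e \<in> set p then f p * w e else 0) = (\<Sum>e\<in>set p. f p * w e)"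
      using finE by (simp add: sum.If_cases Int_absorb1 inf.absorb2)
    thus "(\<Sum>e\<in>E. if e \<in> set p then f p * w e else 0) = f p * (\<Sum>e\<in>set p. w e)"
      by (simp add: sum_distrib_left)
  qed simp
  finally show ?thesis .
qed

lemma load_nonneg: "feasible I Paths m f \<Longrightarrow> 0 \<le> load P f e"
  unfolding load_def feasible_def by (auto intro!: sum_nonneg)

lemma load_le: assumes "feasible I Paths m f" shows "load P f e \<le> sum m I"
proof -
  have "load P f e \<le> (\<Sum>p\<in>P. f p)"
    unfolding load_def using assms unfolding feasible_def by (intro sum_mono) auto
  also have "\<dots> = sum m I" using assms unfolding sum_P feasible_def by simp
  finally show ?thesis .
qed

end


context game begin

definition G :: "'e \<Rightarrow> real \<Rightarrow> real" where "G e y = integral {0..y} (c e)"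

lemma c_int: "e \<in> E \<Longrightarrow> 0 \<le> a \<Longrightarrow> c e integrable_on {a..b}"
  by (rule integrable_continuous_real, rule continuous_on_subset[OF cont]) auto

lemma G_diff: assumes "e \<in> E" "0 \<le> a" "a \<le> b" shows "G e b - G e a = integral {a..b} (c e)"
proof -
  have "integral {0..a} (c e) + integral {a..b} (c e) = integral {0..b} (c e)"
    by (rule Henstock_Kurzweil_Integration.integral_combine) (use assms c_int[of e 0 b] in auto)
  thus ?thesis unfolding G_def by simp
qed

lemma G_bounds: assumes "e \<in> E" "0 \<le> a" "a \<le> b"
  shows "(b - a) * c e a \<le> G e b - G e a" "G e b - G e a \<le> (b - a) * c e b"
proof -
  have m1: "c e a \<le> c e y" if "y \<in> {a..b}" for y
    by (rule mono_onD[OF monoc[OF assms(1)]]) (use that assms in auto)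
  have m2: "c e y \<le> c e b" if "y \<in> {a..b}" for y
    by (rule mono_onD[OF monoc[OF assms(1)]]) (use that assms in auto)
  have ci: "c e integrable_on {a..b}" using c_int[OF assms(1,2)] .
  have "integral {a..b} (\<lambda>y. c e a) \<le> integral {a..b} (c e)"
    by (rule integral_le[OF integrable_const_ivl ci m1])
  thus "(b - a) * c e a \<le> G e b - G e a" using G_diff[OF assms] assms by simp
  have "integral {a..b} (c e) \<le> integral {a..b} (\<lambda>y. c e b)"
    by (rule integral_le[OF ci integrable_const_ivl m2])
  thus "G e b - G e a \<le> (b - a) * c e b" using G_diff[OF assms] assms by simp
qed

lemma G_cont: "e \<in> E \<Longrightarrow> continuous_on {0..B} (G e)"
  unfolding G_def by (rule indefinite_integral_continuous_1, rule c_int) auto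

lemma load_cont: "continuous_on UNIV (\<lambda>f. load P f e)"
  unfolding load_def
proof (intro continuous_on_sum)
  fix p show "continuous_on UNIV (\<lambda>f. if e \<in> set p then f p else (0::real))"
    by (cases "e \<in> set p") auto
qed

definition Phi :: "('e list \<Rightarrow> real) \<Rightarrow> real" where
  "Phi f = (\<Sum>e\<in>E. G e (load P f e))"

lemma load_ge: assumes "feasible I Paths m f" "p \<in> P" "e \<in> set p" shows "f p \<le> load P f e"
proof -
  have "(if e \<in> set p then f p else 0) \<le> load P f e"
    unfolding load_def
    by (rule member_le_sum[of p _ "\<lambda>q. if e \<in> set q then f q else 0"])
       (use assms finPP in \<open>auto simp: feasible_def\<close>)
  thus ?thesis using assms by simp
qed

lemma path_in_P: "i \<in> I \<Longrightarrow> p \<in> Paths i \<Longrightarrow> p \<in> P"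
  unfolding all_paths_def by auto

lemma sum_if_sub: "A \<subseteq> E \<Longrightarrow> (\<Sum>e\<in>E. if e \<in> A then g e else 0) = (\<Sum>e\<in>A. g e)"
  using finE by (simp add: sum.If_cases Int_absorb1 inf.absorb2)

lemma ev_small: "0 < (a::real) \<Longrightarrow> eventually (\<lambda>t. 0 < t \<and> t < a) (at_right 0)"
  by (rule eventually_at_rightI[where b=a]) auto

theorem wardrop_exists:
  assumes m0: "\<And>i. i \<in> I \<Longrightarrow> 0 \<le> m i"
  shows "\<exists>f. wardrop I Paths c m f"
proof -
  define Mt where "Mt = sum m I"
  have mMt: "i \<in> I \<Longrightarrow> m i \<le> Mt" for i
    unfolding Mt_def by (rule member_le_sum) (use m0 finI in auto)
  have Mt0: "0 \<le> Mt" unfolding Mt_def using m0 by (simp add: sum_nonneg)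
  define S where "S = (\<lambda>p. {0..(if p \<in> P then Mt else 0::real)})"
  define K where "K = {f. (\<forall>p. f p \<in> S p) \<and> (\<forall>i\<in>I. (\<Sum>p\<in>Paths i. f p) = m i)}"
  have KB: "K = PiE UNIV S \<inter> (\<Inter>i\<in>I. {f. (\<Sum>p\<in>Paths i. f p) = m i})"
    unfolding K_def by (auto simp: PiE_iff)
  have Kall: "f \<in> K \<Longrightarrow> 0 \<le> f p \<and> f p \<le> (if p \<in> P then Mt else 0)" for f p
    unfolding K_def S_def by auto
  have Kout: "f \<in> K \<Longrightarrow> p \<notin> P \<Longrightarrow> f p = 0" for f p
    using Kall[of f p] by auto
  have Kin: "f \<in> K \<Longrightarrow> p \<in> P \<Longrightarrow> 0 \<le> f p \<and> f p \<le> Mt" for f p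
    using Kall[of f p] by auto
  have Ksum: "f \<in> K \<Longrightarrow> i \<in> I \<Longrightarrow> (\<Sum>p\<in>Paths i. f p) = m i" for f i
    unfolding K_def by auto
  have Kintro: "(\<And>p. p \<notin> P \<Longrightarrow> f p = 0) \<Longrightarrow> (\<And>p. p \<in> P \<Longrightarrow> 0 \<le> f p \<and> f p \<le> Mt)
      \<Longrightarrow> (\<And>i. i \<in> I \<Longrightarrow> (\<Sum>p\<in>Paths i. f p) = m i) \<Longrightarrow> f \<in> K" for f
    unfolding K_def S_def by auto
  have "compactin euclidean (PiE UNIV S)"
    using compactin_PiE[of "\<lambda>_. euclidean" UNIV S] unfolding euclidean_product_topology
    by (auto simp: S_def)
  hence cB: "compact (PiE UNIV S)" by simp
  have "closed (\<Inter>i\<in>I. {f::'e list \<Rightarrow> real. (\<Sum>p\<in>Paths i. f p) = m i})"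
    by (intro closed_INT ballI closed_Collect_eq continuous_on_sum) auto
  hence compK: "compact K" unfolding KB using cB by (rule compact_Int_closed[rotated])
  define pick where "pick i = (SOME p. p \<in> Paths i)" for i
  have pick: "i \<in> I \<Longrightarrow> pick i \<in> Paths i" for i
    unfolding pick_def using neP some_in_eq by metis
  define idx where "idx p = (THE i. i \<in> I \<and> p \<in> Paths i)" for p
  have idx: "i \<in> I \<Longrightarrow> p \<in> Paths i \<Longrightarrow> idx p = i" for i p
    unfolding idx_def by (rule the_equality) (use disj in auto)
  define f0 where "f0 p = (if p \<in> P \<and> p = pick (idx p) then m (idx p) else 0)" for p
  have "f0 \<in> K"
  proof (rule Kintro)
    show "p \<notin> P \<Longrightarrow> f0 p = 0" for p unfolding f0_def by auto
    show "0 \<le> f0 p \<and> f0 p \<le> Mt" if "p \<in> P" for p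
    proof -
      from that obtain i where "i \<in> I" "p \<in> Paths i" unfolding all_paths_def by auto
      thus ?thesis using idx mMt m0 Mt0 unfolding f0_def by auto
    qed
    show "(\<Sum>p\<in>Paths i. f0 p) = m i" if "i \<in> I" for i
    proof -
      have "(\<Sum>p\<in>Paths i. f0 p) = (\<Sum>p\<in>Paths i. if p = pick i then m i else 0)"
        by (rule sum.cong) (use that idx path_in_P in \<open>auto simp: f0_def\<close>)
      also have "\<dots> = m i" using pick[OF that] finP[OF that] by simp
      finally show ?thesis .
    qed
  qed
  hence Kne: "K \<noteq> {}" by auto
  have feasK: "f \<in> K \<Longrightarrow> feasible I Paths m f" for f
    unfolding feasible_def all_paths_def using Kin Ksum path_in_P by auto
  have loadK: "f \<in> K \<Longrightarrow> load P f e \<in> {0..Mt}" for f e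
    using load_nonneg[OF feasK] load_le[OF feasK] unfolding Mt_def by auto
  have contPhi: "continuous_on K Phi"
    unfolding Phi_def
  proof (intro continuous_on_sum)
    fix e assume "e \<in> E"
    show "continuous_on K (\<lambda>f. G e (load P f e))"
      by (rule continuous_on_compose2[OF G_cont[OF \<open>e \<in> E\<close>, of Mt]])
         (use continuous_on_subset[OF load_cont subset_UNIV] loadK in auto)
  qed
  obtain f where fK: "f \<in> K" and fmin: "\<And>g. g \<in> K \<Longrightarrow> Phi f \<le> Phi g"
    using continuous_attains_inf[OF compK Kne contPhi] by auto
  have feas: "feasible I Paths m f" using feasK[OF fK] .
  show ?thesis
  proof (rule exI[of _ f], unfold wardrop_def, rule conjI[OF feas], intro ballI impI)
    fix i p p' assume i: "i \<in> I" and p: "p \<in> Paths i" and p': "p' \<in> Paths i" and fp: "0 < f p"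
    show "path_cost P c f p \<le> path_cost P c f p'"
    proof (rule ccontr)
      assume "\<not> ?thesis"
      hence lt: "path_cost P c f p' < path_cost P c f p" by simp
      hence pp: "p \<noteq> p'" by auto
      have pP: "p \<in> P" and p'P: "p' \<in> P" using i p p' path_in_P by auto
      define x where "x = load P f"
      define g where "g t = (\<lambda>q. f q + (if q = p' then t else 0) - (if q = p then t else 0))" for t
      define S where "S t = (\<Sum>e\<in>E. (if e \<in> set p' \<and> e \<notin> set p then c e (x e + t) else 0)
                              - (if e \<in> set p \<and> e \<notin> set p' then c e (x e - t) else 0))" for t
      have xge: "e \<in> set p \<Longrightarrow> f p \<le> x e" for e unfolding x_def using load_ge[OF feas pP] .
      have x0: "0 \<le> x e" for e unfolding x_def using load_nonneg[OF feas] .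
      have loadg: "load P (g t) e = x e + (if e \<in> set p' then t else 0) - (if e \<in> set p then t else 0)" for t e
      proof -
        have "load P (g t) e = (\<Sum>q\<in>P. (if e \<in> set q then f q else 0)
             + (if q = p' then (if e \<in> set p' then t else 0) else 0)
             - (if q = p then (if e \<in> set p then t else 0) else 0))"
          unfolding load_def g_def by (rule sum.cong) auto
        also have "\<dots> = x e + (if e \<in> set p' then t else 0) - (if e \<in> set p then t else 0)"
          using pP p'P finPP by (simp add: sum.distrib sum_subtractf x_def load_def)
        finally show ?thesis .
      qed
      have gK: "0 < t \<Longrightarrow> t \<le> f p \<Longrightarrow> g t \<in> K" for t
      proof -
        assume t: "0 < t" "t \<le> f p"
        have sums: "(\<Sum>q\<in>Paths j. g t q) = m j" if j: "j \<in> I" for j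
        proof -
          have "(\<Sum>q\<in>Paths j. g t q) = (\<Sum>q\<in>Paths j. f q) + (if p' \<in> Paths j then t else 0)
                  - (if p \<in> Paths j then t else 0)"
            unfolding g_def using finP[OF j] by (simp add: sum.distrib sum_subtractf)
          also have "\<dots> = m j"
          proof (cases "j = i")
            case True thus ?thesis using p p' Ksum[OF fK j] by auto
          next
            case False thus ?thesis using disj[OF i j] p p' Ksum[OF fK j] by auto
          qed
          finally show ?thesis .
        qed
        have ge: "0 \<le> g t q" if "q \<in> P" for q
          using Kin[OF fK that] Kin[OF fK pP] t pp unfolding g_def by auto
        have le: "g t q \<le> Mt" if "q \<in> P" for q
        proof -
          from that obtain j where j: "j \<in> I" "q \<in> Paths j" unfolding all_paths_def by auto
          have "g t q \<le> (\<Sum>q\<in>Paths j. g t q)"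
          proof (rule member_le_sum[OF j(2) _ finP[OF j(1)]])
            fix r assume "r \<in> Paths j - {q}"
            hence "r \<in> P" using j path_in_P by auto
            thus "0 \<le> g t r" by (rule ge)
          qed
          thus ?thesis using sums[OF j(1)] mMt[OF j(1)] by simp
        qed
        show "g t \<in> K"
        proof (rule Kintro)
          show "q \<notin> P \<Longrightarrow> g t q = 0" for q using Kout[OF fK] pP p'P unfolding g_def by auto
        qed (use ge le sums in auto)
      qed
      have PhiS: "Phi (g t) - Phi f \<le> t * S t" if t: "0 < t" "t \<le> f p" for t
      proof -
        have "Phi (g t) - Phi f = (\<Sum>e\<in>E. G e (load P (g t) e) - G e (x e))"
          unfolding Phi_def x_def by (simp add: sum_subtractf)
        also have "\<dots> \<le> (\<Sum>e\<in>E. t * ((if e \<in> set p' \<and> e \<notin> set p then c e (x e + t) else 0)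
                              - (if e \<in> set p \<and> e \<notin> set p' then c e (x e - t) else 0)))"
        proof (rule sum_mono)
          fix e assume e: "e \<in> E"
          consider "e \<in> set p' \<and> e \<notin> set p" | "e \<in> set p \<and> e \<notin> set p'"
            | "(e \<in> set p) = (e \<in> set p')" by blast
          thus "G e (load P (g t) e) - G e (x e) \<le> t * ((if e \<in> set p' \<and> e \<notin> set p then c e (x e + t) else 0)
                              - (if e \<in> set p \<and> e \<notin> set p' then c e (x e - t) else 0))"
          proof cases
            case 1
            thus ?thesis using G_bounds(2)[OF e x0[of e], of "x e + t"] t loadg[of t e] by auto
          next
            case 2
            have "0 \<le> x e - t" using xge[of e] 2 t by auto
            thus ?thesis using G_bounds(1)[OF e \<open>0 \<le> x e - t\<close>, of "x e"] t loadg[of t e] 2 by auto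
          qed (use loadg[of t e] in auto)
        qed
        also have "\<dots> = t * S t" unfolding S_def by (simp add: sum_distrib_left)
        finally show ?thesis .
      qed
      have T1: "((\<lambda>t. if e \<in> set p' \<and> e \<notin> set p then c e (x e + t) else 0) \<longlongrightarrow>
                (if e \<in> set p' \<and> e \<notin> set p then c e (x e) else 0)) (at_right 0)" if e: "e \<in> E" for e
      proof (cases "e \<in> set p' \<and> e \<notin> set p")
        case True
        have lim: "((\<lambda>t. x e + t) \<longlongrightarrow> x e) (at_right 0)"
          using tendsto_add[OF tendsto_const[of "x e"] tendsto_ident_at[of 0 "{0<..}"]] by simp
        have ev: "eventually (\<lambda>t. x e + t \<in> {0..}) (at_right (0::real))"
          using eventually_at_right_less[of 0] by (rule eventually_mono) (use x0[of e] in auto)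
        have "((\<lambda>t. c e (x e + t)) \<longlongrightarrow> c e (x e)) (at_right 0)"
          by (rule continuous_on_tendsto_compose[OF cont[OF e] lim _ ev]) (use x0[of e] in auto)
        thus ?thesis using True by simp
      next
        case False
        hence "(\<lambda>t. if e \<in> set p' \<and> e \<notin> set p then c e (x e + t) else 0) = (\<lambda>t. 0)" by auto
        thus ?thesis using False by (simp only: if_False if_not_P tendsto_const)
      qed
      have T2: "((\<lambda>t. if e \<in> set p \<and> e \<notin> set p' then c e (x e - t) else 0) \<longlongrightarrow>
                (if e \<in> set p \<and> e \<notin> set p' then c e (x e) else 0)) (at_right 0)" if e: "e \<in> E" for e
      proof (cases "e \<in> set p \<and> e \<notin> set p'")
        case True
        have lim: "((\<lambda>t. x e - t) \<longlongrightarrow> x e) (at_right 0)"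
          using tendsto_diff[OF tendsto_const[of "x e"] tendsto_ident_at[of 0 "{0<..}"]] by simp
        have ev: "eventually (\<lambda>t. x e - t \<in> {0..}) (at_right (0::real))"
          using ev_small[OF fp] by (rule eventually_mono) (use xge[of e] True in auto)
        have "((\<lambda>t. c e (x e - t)) \<longlongrightarrow> c e (x e)) (at_right 0)"
          by (rule continuous_on_tendsto_compose[OF cont[OF e] lim _ ev]) (use x0[of e] in auto)
        thus ?thesis using True by simp
      next
        case False
        hence "(\<lambda>t. if e \<in> set p \<and> e \<notin> set p' then c e (x e - t) else 0) = (\<lambda>t. 0)" by auto
        thus ?thesis using False by (simp only: if_False if_not_P tendsto_const)
      qed
      have "(S \<longlongrightarrow> (\<Sum>e\<in>E. (if e \<in> set p' \<and> e \<notin> set p then c e (x e) else 0)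
                              - (if e \<in> set p \<and> e \<notin> set p' then c e (x e) else 0))) (at_right 0)"
        unfolding S_def by (intro tendsto_sum tendsto_diff T1 T2)
      moreover have "(\<Sum>e\<in>E. (if e \<in> set p' \<and> e \<notin> set p then c e (x e) else 0)
                              - (if e \<in> set p \<and> e \<notin> set p' then c e (x e) else 0))
             = (\<Sum>e\<in>E. (if e \<in> set p' then c e (x e) else 0) - (if e \<in> set p then c e (x e) else 0))"
        by (rule sum.cong) auto
      moreover have "\<dots> = path_cost P c f p' - path_cost P c f p"
        unfolding path_cost_def x_def sum_subtractf
        by (simp add: sum_if_sub[OF P_sub[OF pP]] sum_if_sub[OF P_sub[OF p'P]])
      ultimately have S0: "(S \<longlongrightarrow> path_cost P c f p' - path_cost P c f p) (at_right 0)" by simp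
      have "eventually (\<lambda>t. S t < 0) (at_right 0)"
        using order_tendstoD(2)[OF S0] lt by simp
      hence "eventually (\<lambda>t. S t < 0 \<and> 0 < t \<and> t < f p) (at_right (0::real))"
        using ev_small[OF fp] by (rule eventually_conj)
      then obtain t where t: "S t < 0" "0 < t" "t < f p"
        using eventually_happens[of _ "at_right (0::real)"] by auto
      have "Phi (g t) - Phi f < 0"
        using PhiS[of t] t mult_pos_neg[of t "S t"] by linarith
      thus False using fmin[OF gK[of t]] t by simp
    qed
  qed
qed

end


context game begin

definition dmin where "dmin f i = Min (path_cost P c f ` Paths i)"
definition Dmax where "Dmax f = Max (dmin f ` I)"

lemma cost_nonneg: "feasible I Paths m f \<Longrightarrow> p \<in> P \<Longrightarrow> 0 \<le> path_cost P c f p"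
  unfolding path_cost_def using P_sub by (auto intro!: sum_nonneg cnonneg load_nonneg)

lemma dmin_le: "i \<in> I \<Longrightarrow> p \<in> Paths i \<Longrightarrow> dmin f i \<le> path_cost P c f p"
  unfolding dmin_def using finP by auto

lemma dmin_nonneg: "feasible I Paths m f \<Longrightarrow> i \<in> I \<Longrightarrow> 0 \<le> dmin f i"
  unfolding dmin_def using finP neP cost_nonneg path_in_P by auto

lemma dmin_attained: "i \<in> I \<Longrightarrow> \<exists>p\<in>Paths i. path_cost P c f p = dmin f i"
  unfolding dmin_def using finP neP
  by (metis (mono_tags, lifting) Min_in finite_imageI image_iff image_is_empty)

lemma dmin_eq: assumes "wardrop I Paths c m f" "i \<in> I" "p \<in> Paths i" "0 < f p"
  shows "path_cost P c f p = dmin f i"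
proof -
  obtain p' where "p' \<in> Paths i" "path_cost P c f p' = dmin f i" using dmin_attained[OF assms(2)] by auto
  hence "path_cost P c f p \<le> path_cost P c f p'" using assms unfolding wardrop_def by blast
  thus ?thesis using \<open>path_cost P c f p' = dmin f i\<close> dmin_le[OF assms(2,3), of f] by linarith
qed

lemma Dmax_ge: "i \<in> I \<Longrightarrow> dmin f i \<le> Dmax f"
  unfolding Dmax_def using finI by auto

lemma Dmax_attained: "I \<noteq> {} \<Longrightarrow> \<exists>i\<in>I. dmin f i = Dmax f"
  unfolding Dmax_def using finI by (metis (mono_tags, lifting) Max_in finite_imageI image_iff image_is_empty)

lemma sum_paths_cost:
  assumes "wardrop I Paths c m f" "i \<in> I"
  shows "(\<Sum>p\<in>Paths i. f p * path_cost P c f p) = m i * dmin f i"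
proof -
  have "(\<Sum>p\<in>Paths i. f p * path_cost P c f p) = (\<Sum>p\<in>Paths i. f p * dmin f i)"
  proof (rule sum.cong)
    fix p assume p: "p \<in> Paths i"
    have "0 \<le> f p" using assms p path_in_P unfolding wardrop_def feasible_def by auto
    thus "f p * path_cost P c f p = f p * dmin f i"
      using dmin_eq[OF assms p] by (cases "f p = 0") auto
  qed simp
  also have "\<dots> = (\<Sum>p\<in>Paths i. f p) * dmin f i" by (rule sum_distrib_right[symmetric])
  also have "\<dots> = m i * dmin f i" using assms unfolding wardrop_def feasible_def by simp
  finally show ?thesis .
qed

lemma eq_cost:
  assumes "wardrop I Paths c m f"
  shows "social_cost E P c f = (\<Sum>i\<in>I. m i * dmin f i)"
proof -
  have "social_cost E P c f = (\<Sum>e\<in>E. c e (load P f e) * load P f e)"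
    unfolding social_cost_def by (simp add: mult.commute)
  also have "\<dots> = (\<Sum>p\<in>P. f p * path_cost P c f p)"
    unfolding exchange path_cost_def ..
  also have "\<dots> = (\<Sum>i\<in>I. m i * dmin f i)"
    unfolding sum_P using sum_paths_cost[OF assms] by simp
  finally show ?thesis .
qed

lemma used_edge_le:
  assumes w: "wardrop I Paths c m f" and e: "e \<in> E" and v: "0 < load P f e"
  shows "c e (load P f e) \<le> Dmax f"
proof -
  obtain p where p: "p \<in> P" "e \<in> set p" "0 < f p"
  proof (rule ccontr)
    assume "\<not> thesis"
    hence "\<forall>p\<in>P. e \<in> set p \<longrightarrow> f p \<le> 0" using that by force
    hence "load P f e \<le> 0" unfolding load_def by (intro sum_nonpos) auto
    thus False using v by simp
  qed
  then obtain i where i: "i \<in> I" "p \<in> Paths i" unfolding all_paths_def by auto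
  have feas: "feasible I Paths m f" using w unfolding wardrop_def by auto
  have "c e (load P f e) \<le> path_cost P c f p"
    unfolding path_cost_def
    by (rule member_le_sum[OF p(2)]) (use P_sub[OF p(1)] load_nonneg[OF feas] in \<open>auto intro!: cnonneg\<close>)
  also have "\<dots> = dmin f i" using dmin_eq[OF w i p(3)] .
  also have "\<dots> \<le> Dmax f" using Dmax_ge[OF i(1)] .
  finally show ?thesis .
qed

lemma VI:
  assumes w: "wardrop I Paths c m f" and g: "feasible I Paths m g"
  shows "0 \<le> (\<Sum>e\<in>E. min (c e (load P f e)) (Dmax f) * (load P g e - load P f e))"
proof -
  have feas: "feasible I Paths m f" using w unfolding wardrop_def by auto
  define ch where "ch e = min (c e (load P f e)) (Dmax f)" for e
  obtain i0 where "i0 \<in> I" "dmin f i0 = Dmax f" using Dmax_attained[OF neI, of f] by auto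
  hence D0: "0 \<le> Dmax f" using dmin_nonneg[OF feas] by metis
  have ch0: "e \<in> E \<Longrightarrow> 0 \<le> ch e" for e unfolding ch_def using D0 cnonneg load_nonneg[OF feas] by auto
  have pathb: "dmin f i \<le> (\<Sum>e\<in>set p. ch e)" if i: "i \<in> I" and p: "p \<in> Paths i" for i p
  proof (cases "\<exists>e\<in>set p. Dmax f < c e (load P f e)")
    case True
    then obtain e where e: "e \<in> set p" "Dmax f < c e (load P f e)" by auto
    have sE: "set p \<subseteq> E" using subE[OF i p] .
    have "dmin f i \<le> ch e" using e Dmax_ge[OF i] unfolding ch_def by simp
    also have "\<dots> \<le> (\<Sum>e\<in>set p. ch e)" by (rule member_le_sum[OF e(1)]) (use sE ch0 in auto)
    finally show ?thesis .
  next
    case False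
    hence "(\<Sum>e\<in>set p. ch e) = path_cost P c f p" unfolding path_cost_def ch_def
      by (intro sum.cong) auto
    thus ?thesis using dmin_le[OF i p] by simp
  qed
  have "(\<Sum>e\<in>E. ch e * load P g e) = (\<Sum>i\<in>I. \<Sum>p\<in>Paths i. g p * (\<Sum>e\<in>set p. ch e))"
    unfolding exchange sum_P ..
  also have "\<dots> \<ge> (\<Sum>i\<in>I. \<Sum>p\<in>Paths i. g p * dmin f i)"
  proof (intro sum_mono)
    fix i p assume i: "i \<in> I" and p: "p \<in> Paths i"
    have "0 \<le> g p" using g path_in_P[OF i p] unfolding feasible_def by auto
    thus "g p * dmin f i \<le> g p * (\<Sum>e\<in>set p. ch e)" using pathb[OF i p] by (rule mult_left_mono[rotated])
  qed
  also have "(\<Sum>i\<in>I. \<Sum>p\<in>Paths i. g p * dmin f i) = (\<Sum>i\<in>I. m i * dmin f i)"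
    using g unfolding feasible_def by (simp add: sum_distrib_right[symmetric])
  also have "\<dots> = (\<Sum>e\<in>E. load P f e * c e (load P f e))"
    using eq_cost[OF w] unfolding social_cost_def ..
  also have "\<dots> = (\<Sum>e\<in>E. ch e * load P f e)"
  proof (rule sum.cong)
    fix e assume e: "e \<in> E"
    show "load P f e * c e (load P f e) = ch e * load P f e"
    proof (cases "load P f e = 0")
      case False
      hence "0 < load P f e" using load_nonneg[OF feas] by (simp add: less_le)
      thus ?thesis using used_edge_le[OF w e] unfolding ch_def by simp
    qed simp
  qed simp
  finally show ?thesis unfolding ch_def[symmetric] by (simp add: right_diff_distrib sum_subtractf)
qed

end


lemma ev_pos: "F = at_top \<or> F = at_right 0 \<Longrightarrow> eventually (\<lambda>M::real. 0 < M) F"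
  using eventually_gt_at_top[of "0::real"] eventually_at_right_less[of "0::real"] by auto

lemma ev_small': "0 < (b::real) \<Longrightarrow> eventually (\<lambda>t. 0 < t \<and> t < b) (at_right 0)"
  by (rule eventually_at_rightI[where b=b]) auto

lemma ev_interval:
  assumes F: "F = at_top \<or> F = at_right 0" and d: "0 < (\<delta>::real)" and P: "eventually P F"
  shows "eventually (\<lambda>M. \<forall>t. \<delta> * M \<le> t \<and> t \<le> M \<longrightarrow> P t) F"
  using F
proof
  assume F: "F = at_top"
  then obtain N where N: "\<And>n. N \<le> n \<Longrightarrow> P n" using P by (auto simp: eventually_at_top_linorder)
  have "eventually (\<lambda>M. N / \<delta> \<le> M) at_top" by (rule eventually_ge_at_top)
  hence "eventually (\<lambda>M. \<forall>t. \<delta> * M \<le> t \<and> t \<le> M \<longrightarrow> P t) at_top"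
  proof (rule eventually_mono)
    fix M assume "N / \<delta> \<le> M"
    hence "N \<le> \<delta> * M" using d by (simp add: field_simps)
    thus "\<forall>t. \<delta> * M \<le> t \<and> t \<le> M \<longrightarrow> P t" using N by auto
  qed
  thus ?thesis using F by simp
next
  assume F: "F = at_right 0"
  then obtain b where b: "0 < b" "\<And>y. 0 < y \<Longrightarrow> y < b \<Longrightarrow> P y"
    using P by (auto simp: eventually_at_right_field)
  have "eventually (\<lambda>M. \<forall>t. \<delta> * M \<le> t \<and> t \<le> M \<longrightarrow> P t) (at_right 0)"
    using ev_small'[OF b(1)]
  proof (rule eventually_mono)
    fix M assume M: "0 < M \<and> M < b"
    show "\<forall>t. \<delta> * M \<le> t \<and> t \<le> M \<longrightarrow> P t"
    proof (intro allI impI)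
      fix t assume t: "\<delta> * M \<le> t \<and> t \<le> M"
      have "0 < \<delta> * M" using d M by simp
      thus "P t" using b(2)[of t] t M by linarith
    qed
  qed
  thus ?thesis using F by simp
qed

lemma top_ne_right: "(at_top::real filter) \<noteq> at_right 0"
proof
  assume h: "(at_top::real filter) = at_right 0"
  have "eventually (\<lambda>x::real. 1 < x) at_top" by (rule eventually_gt_at_top)
  hence "eventually (\<lambda>x::real. 1 < x) (at_right 0)" using h by simp
  then obtain b::real where b: "0 < b" "\<And>y. 0 < y \<Longrightarrow> y < b \<Longrightarrow> 1 < y"
    by (auto simp: eventually_at_right_field)
  have "1 < min b 1 / 2" using b(1) by (intro b(2)) (auto simp: min_def)
  thus False by (simp add: min_def split: if_splits)
qed

lemma pw_top: "0 < r \<Longrightarrow> eventually (\<lambda>M::real. K \<le> M powr r) at_top"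
proof (cases "K \<le> 0")
  case True thus ?thesis by (intro always_eventually) (auto intro: order_trans[OF _ powr_ge_zero])
next
  case False
  assume r: "0 < r"
  have "eventually (\<lambda>M. K powr (1/r) \<le> M) at_top" by (rule eventually_ge_at_top)
  thus ?thesis
  proof (rule eventually_mono)
    fix M assume M: "K powr (1/r) \<le> M"
    have "K = (K powr (1/r)) powr r" using False r by (simp add: powr_powr)
    also have "\<dots> \<le> M powr r" by (rule powr_mono2) (use r M in auto)
    finally show "K \<le> M powr r" .
  qed
qed

lemma pw_zero: assumes "0 < r" "0 < K" shows "eventually (\<lambda>M::real. M powr r \<le> K) (at_right 0)"
proof -
  have "0 < K powr (1/r)" using assms by simp
  from ev_small'[OF this] show ?thesis
  proof (rule eventually_mono)
    fix M assume M: "0 < M \<and> M < K powr (1/r)"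
    have "M powr r \<le> (K powr (1/r)) powr r" by (rule powr_mono2) (use assms M in auto)
    also have "\<dots> = K" using assms by (simp add: powr_powr)
    finally show "M powr r \<le> K" .
  qed
qed

lemma tpow: "0 \<le> (t::real) \<Longrightarrow> t powr (q + 1) = t * t powr q"
  by (cases "t = 0") (auto simp: powr_add mult.commute)

lemma tangent:
  fixes q v x :: real
  assumes q: "0 \<le> q" and v: "0 < v" and x: "0 \<le> x"
  shows "v * v powr q + (q + 1) * v powr q * (x - v) \<le> x * x powr q"
proof (cases "x = 0")
  case True
  have "v * v powr q + (q + 1) * v powr q * (0 - v) = - q * (v * v powr q)" by (simp add: algebra_simps)
  also have "\<dots> \<le> 0" using q v by (simp add: mult_nonneg_nonneg)
  finally show ?thesis using True by simp
next
  case False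
  hence x0: "0 < x" using x by simp
  have cv: "convex_on {0<..} (\<lambda>t. t powr (q + 1))" by (rule powr_convex) (use q in simp)
  have d: "((\<lambda>t. t powr (q + 1)) has_field_derivative (q + 1) * v powr q) (at v within {0<..})"
    using has_real_derivative_powr[OF v, of "q + 1"] by (auto intro: has_field_derivative_at_within)
  have "x powr (q + 1) - v powr (q + 1) \<ge> (q + 1) * v powr q * (x - v)"
    by (rule convex_on_imp_above_tangent[OF cv _ _ _ d]) (use v x0 in \<open>auto simp: interior_open\<close>)
  thus ?thesis using tpow[of x q] tpow[of v q] x v by (simp add: algebra_simps)
qed



locale edge_cost =
  fixes cc :: "real \<Rightarrow> real" and q a :: real and F :: "real filter"
  assumes Fc: "F = at_top \<or> F = at_right 0"
    and cont: "continuous_on {0..} cc" and monoc: "mono_on {0..} cc"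
    and nn: "\<And>x. 0 \<le> x \<Longrightarrow> 0 \<le> cc x"
    and q0: "0 \<le> q" and a0: "0 < a" and lim: "((\<lambda>x. cc x / x powr q) \<longlongrightarrow> a) F"
begin

lemma mono': "0 \<le> x \<Longrightarrow> x \<le> y \<Longrightarrow> cc x \<le> cc y"
  by (rule mono_onD[OF monoc]) auto

lemma Fnb: "F \<noteq> bot" using Fc trivial_limit_at_right_real trivial_limit_at_top_linorder by metis

lemma good_ev: "0 < \<epsilon> \<Longrightarrow> eventually (\<lambda>x. 0 < x \<and> \<bar>cc x - a * x powr q\<bar> \<le> \<epsilon> * x powr q) F"
proof -
  assume e: "0 < \<epsilon>"
  have "eventually (\<lambda>x. dist (cc x / x powr q) a < \<epsilon>) F" using tendstoD[OF lim e] .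
  moreover have "eventually (\<lambda>x. 0 < x) F" using ev_pos[OF Fc] .
  ultimately show ?thesis
  proof eventually_elim
    case (elim x)
    have xq: "0 < x powr q" using elim by simp
    have "cc x - a * x powr q = (cc x / x powr q - a) * x powr q"
      using xq by (simp add: field_simps)
    hence "\<bar>cc x - a * x powr q\<bar> = \<bar>cc x / x powr q - a\<bar> * x powr q"
      using xq by (simp add: abs_mult)
    also have "\<dots> \<le> \<epsilon> * x powr q" using elim xq by (intro mult_right_mono) (auto simp: dist_real_def)
    finally show ?case using elim by simp
  qed
qed

lemma U: "0 < \<delta> \<Longrightarrow> 0 < \<epsilon> \<Longrightarrow>
  eventually (\<lambda>M. \<forall>t. \<delta> * M \<le> t \<and> t \<le> M \<longrightarrow> 0 < t \<and> \<bar>cc t - a * t powr q\<bar> \<le> \<epsilon> * t powr q) F"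
  by (rule ev_interval[OF Fc], assumption, rule good_ev)

lemma LB2: assumes "0 < \<eta>" "\<eta> \<le> 1"
  shows "eventually (\<lambda>M. 0 < M \<and> a/2 * (\<eta>*M) powr q \<le> cc (\<eta>*M) \<and> cc M \<le> 2*a * M powr q) F"
proof -
  have h: "0 < a/2" using a0 by simp
  show ?thesis using U[OF assms(1) h] ev_pos[OF Fc]
proof eventually_elim
  case (elim M)
  have "\<eta> * M \<le> M" using assms elim by (simp add: mult_le_cancel_right1)
  hence 1: "\<bar>cc (\<eta>*M) - a * (\<eta>*M) powr q\<bar> \<le> a/2 * (\<eta>*M) powr q" using elim by auto
  have 2: "\<bar>cc M - a * M powr q\<bar> \<le> a/2 * M powr q" using elim \<open>\<eta> * M \<le> M\<close> by auto
  have 1: "a/2 * (\<eta>*M) powr q \<le> cc (\<eta>*M)" using 1 unfolding abs_le_iff by linarith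
  have "0 \<le> a * M powr q" using a0 by simp
  hence 2: "cc M \<le> 2*a * M powr q" using 2 unfolding abs_le_iff by linarith
  show ?case using 1 2 elim by auto
qed
qed

lemma cc_tendsto0: "q = 0 \<Longrightarrow> (cc \<longlongrightarrow> a) F"
proof -
  assume q: "q = 0"
  have "eventually (\<lambda>x. cc x / x powr q = cc x) F"
    using ev_pos[OF Fc] by eventually_elim (simp add: q)
  from tendsto_cong[OF this] show ?thesis using lim by simp
qed

lemma cup: assumes "F = at_top" "q = 0" "0 \<le> x" shows "cc x \<le> a"
proof -
  have "eventually (\<lambda>t. cc x \<le> cc t) at_top"
    using eventually_ge_at_top[of x] by eventually_elim (use assms mono' in auto)
  hence "eventually (\<lambda>t. cc x \<le> cc t) F" using assms(1) by simp
  thus ?thesis using tendsto_lowerbound[OF cc_tendsto0[OF assms(2)] _ Fnb] by simp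
qed

lemma c0_light: assumes "F = at_right 0" shows "((\<lambda>t. cc t) \<longlongrightarrow> cc 0) F"
proof -
  have "((\<lambda>t. cc t) \<longlongrightarrow> cc 0) (at_right 0)"
    by (rule continuous_on_tendsto_compose[OF cont tendsto_ident_at])
       (auto intro: eventually_mono[OF eventually_at_right_less])
  thus ?thesis using assms by simp
qed

lemma cdown: assumes "F = at_right 0" "q = 0" "0 \<le> x" shows "a \<le> cc x"
proof -
  have "cc 0 = a" using tendsto_unique[OF Fnb c0_light[OF assms(1)] cc_tendsto0[OF assms(2)]] .
  thus ?thesis using mono'[OF _ assms(3)] by simp
qed

lemma czero: assumes "F = at_right 0" "0 < q" shows "cc 0 = 0"
proof -
  have ev0: "eventually (\<lambda>x. 0 \<le> x) F" using ev_pos[OF Fc] by (rule eventually_mono) simp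
  have "((\<lambda>x. cc x / x powr q * x powr q) \<longlongrightarrow> a * 0 powr q) F"
    using ev0 by (intro tendsto_intros lim) (use assms in auto)
  moreover have "eventually (\<lambda>x. cc x / x powr q * x powr q = cc x) F"
    using ev_pos[OF Fc] by eventually_elim simp
  ultimately have "(cc \<longlongrightarrow> 0) F" using assms tendsto_cong[of "\<lambda>x. cc x / x powr q * x powr q" cc] by simp
  thus ?thesis using tendsto_unique[OF Fnb c0_light[OF assms(1)]] by simp
qed

lemma grow: assumes "F = at_top" "0 < q" "0 < \<eta>" "\<eta> \<le> 1"
  shows "eventually (\<lambda>M. K \<le> cc (\<eta>*M)) F"
proof -
  have l: "eventually (\<lambda>M. 0 < M \<and> a/2 * (\<eta>*M) powr q \<le> cc (\<eta>*M) \<and> cc M \<le> 2*a * M powr q) at_top"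
    using LB2[OF assms(3,4)] assms(1) by simp
  show ?thesis unfolding assms(1)
  using l pw_top[OF assms(2), of "2 * K / (a * \<eta> powr q)"]
proof eventually_elim
  case (elim M)
  have p: "0 < \<eta> powr q" using assms by simp
  have "K \<le> a/2 * (\<eta> powr q * M powr q)"
    using elim p a0 by (simp add: field_simps)
  also have "\<dots> = a/2 * (\<eta>*M) powr q" by (simp add: powr_mult)
  also have "\<dots> \<le> cc (\<eta>*M)" using elim by simp
  finally show ?case .
qed
qed

lemma shrink: assumes "F = at_right 0" "0 < q" "0 < K"
  shows "eventually (\<lambda>M. cc M \<le> K) F"
proof -
  have l: "eventually (\<lambda>M. 0 < M \<and> a/2 * (1*M) powr q \<le> cc (1*M) \<and> cc M \<le> 2*a * M powr q) (at_right 0)"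
    using LB2[OF zero_less_one order_refl] assms(1) by simp
  have "0 < K / (2*a)" using assms a0 by simp
  show ?thesis unfolding assms(1)
  using l pw_zero[OF assms(2) \<open>0 < K / (2*a)\<close>]
proof eventually_elim
  case (elim M)
  have "cc M \<le> 2*a * M powr q" using elim by simp
  also have "\<dots> \<le> 2*a * (K / (2*a))" using elim a0 by (intro mult_left_mono) auto
  finally show ?case using a0 by simp
qed
qed

lemma absorb: assumes "0 \<le> B" "F = at_right 0 \<longrightarrow> B = 0" "0 < \<eta>" "\<eta> \<le> 1" "0 < \<epsilon>"
  shows "eventually (\<lambda>M. B \<le> \<epsilon> * M * cc (\<eta>*M)) F"
  using Fc
proof
  assume F: "F = at_right 0"
  show ?thesis using ev_pos[OF Fc]
  proof eventually_elim
    case (elim M) thus ?case using assms F nn[of "\<eta>*M"] by (simp add: mult_nonneg_nonneg)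
  qed
next
  assume F: "F = at_top"
  have "eventually (\<lambda>M. max (1/\<eta>) (2*B/(\<epsilon>*a)) \<le> M) F" unfolding F by (rule eventually_ge_at_top)
  thus ?thesis using LB2[OF assms(3,4)]
  proof eventually_elim
    case (elim M)
    have "1 \<le> \<eta> * M" using elim assms by (simp add: field_simps)
    hence "1 \<le> (\<eta>*M) powr q" using q0 by (rule ge_one_powr_ge_zero)
    hence "a/2 * 1 \<le> a/2 * (\<eta>*M) powr q" using a0 by (intro mult_left_mono) auto
    hence ca: "a/2 \<le> cc (\<eta>*M)" using elim by linarith
    have "B = \<epsilon> * (2*B/(\<epsilon>*a)) * (a/2)" using assms a0 by (simp add: field_simps)
    also have "\<dots> \<le> \<epsilon> * M * cc (\<eta>*M)"
      using elim ca assms a0 by (intro mult_mono mult_left_mono) auto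
    finally show ?case .
  qed
qed

end


context edge_cost begin

lemma H2: assumes eta: "0 < \<eta>" "\<eta> \<le> 1" and ep: "0 < \<epsilon>"
  shows "eventually (\<lambda>M. \<forall>v x. \<eta>*M \<le> v \<and> v \<le> M \<and> 0 \<le> x \<and> x \<le> M \<longrightarrow>
           (q+1) * cc v * (x - v) - x * cc x + v * cc v \<le> \<epsilon> * M * cc (\<eta>*M)) F"
proof -
  define e1 where "e1 = min (a/2) (\<epsilon> * a * \<eta> powr q / (4*q+4))"
  have etq: "0 < \<eta> powr q" using eta by simp
  have q4: "0 < 4*q+4" using q0 by simp
  have e1p: "0 < e1" unfolding e1_def using a0 etq ep q4 by simp
  have e1a: "e1 \<le> a/2" unfolding e1_def by (rule min.cobounded1)
  have "e1 \<le> \<epsilon> * a * \<eta> powr q / (4*q+4)" unfolding e1_def by (rule min.cobounded2)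
  hence "e1 * (4*q+4) \<le> \<epsilon> * a * \<eta> powr q" using q4 by (simp add: pos_le_divide_eq)
  moreover have "e1 * (2*q+2) * 2 = e1 * (4*q+4)" by (simp add: algebra_simps)
  moreover have "\<epsilon> * (a/2) * \<eta> powr q * 2 = \<epsilon> * a * \<eta> powr q" by simp
  ultimately have e1b: "e1 * (2*q+2) \<le> \<epsilon> * (a/2) * \<eta> powr q" by linarith
  define \<delta> where "\<delta> = min \<eta> (min 1 (e1/a))"
  have dp: "0 < \<delta>" unfolding \<delta>_def using eta e1p a0 by simp
  have de: "\<delta> \<le> \<eta>" unfolding \<delta>_def by simp
  have d1: "\<delta> \<le> 1" unfolding \<delta>_def by simp
  have "\<delta> \<le> e1/a" unfolding \<delta>_def by simp
  hence ad: "a * \<delta> \<le> e1" using a0 by (simp add: field_simps)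
  show ?thesis using U[OF dp e1p] ev_pos[OF Fc]
  proof eventually_elim
    case (elim M)
    hence M0: "0 < M" and Ut: "\<And>t. \<delta>*M \<le> t \<Longrightarrow> t \<le> M \<Longrightarrow> 0 < t \<and> \<bar>cc t - a * t powr q\<bar> \<le> e1 * t powr q"
      by auto
    define Mq where "Mq = M powr q"
    have Mq0: "0 \<le> Mq" unfolding Mq_def by simp
    show ?case
    proof (intro allI impI)
      fix v x assume vx: "\<eta>*M \<le> v \<and> v \<le> M \<and> 0 \<le> x \<and> x \<le> M"
      have v0: "0 < v" using vx eta M0 by (smt (verit) mult_pos_pos)
      have vin: "\<delta>*M \<le> v" using vx de M0 by (smt (verit) mult_right_mono)
      have vq: "v powr q \<le> Mq" unfolding Mq_def by (rule powr_mono2) (use q0 vx v0 in auto)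
      have xq: "x powr q \<le> Mq" unfolding Mq_def by (rule powr_mono2) (use q0 vx in auto)
      have cvU: "cc v \<le> (a + e1) * v powr q" and cvL: "(a - e1) * v powr q \<le> cc v"
        using Ut[OF vin] vx unfolding abs_le_iff by (auto simp: algebra_simps)
      have P1: "x * v powr q \<le> M * Mq" using vx vq by (intro mult_mono) auto
      have P2: "v * v powr q \<le> M * Mq" using vx vq v0 by (intro mult_mono) auto
      have P3: "x * x powr q \<le> M * Mq" using vx xq by (intro mult_mono) auto
      have hx: "a * (x * x powr q) - e1 * (M * Mq) \<le> x * cc x"
      proof (cases "\<delta>*M \<le> x")
        case True
        have "(a - e1) * x powr q \<le> cc x" using Ut[OF True] vx unfolding abs_le_iff by (auto simp: algebra_simps)
        hence "x * ((a - e1) * x powr q) \<le> x * cc x" using vx by (intro mult_left_mono) auto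
        moreover have "e1 * (x * x powr q) \<le> e1 * (M * Mq)" using P3 e1p by (intro mult_left_mono) auto
        ultimately show ?thesis by (simp add: algebra_simps)
      next
        case False
        have "x * x powr q \<le> (\<delta>*M) * Mq" using False xq vx by (intro mult_mono) auto
        hence "a * (x * x powr q) \<le> a * ((\<delta>*M) * Mq)" using a0 by (intro mult_left_mono) auto
        also have "\<dots> = (a * \<delta>) * (M * Mq)" by (simp add: algebra_simps)
        also have "\<dots> \<le> e1 * (M * Mq)" using ad M0 Mq0 by (intro mult_right_mono) auto
        moreover have "0 \<le> x * cc x" using nn[of x] vx by (simp add: mult_nonneg_nonneg)
        ultimately show ?thesis by linarith
      qed
      have tg: "(q+1) * (x * v powr q) - q * (v * v powr q) \<le> x * x powr q"
        using tangent[OF q0 v0, of x] vx by (simp add: algebra_simps)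
      have "(q+1) * cc v * (x - v) - x * cc x + v * cc v
             = (q+1) * x * cc v - q * v * cc v - x * cc x" by (simp add: algebra_simps)
      also have "\<dots> \<le> (q+1) * x * ((a + e1) * v powr q) - q * v * ((a - e1) * v powr q)
                       - (a * (x * x powr q) - e1 * (M * Mq))"
      proof -
        have "(q+1) * x * cc v \<le> (q+1) * x * ((a + e1) * v powr q)"
          using cvU vx q0 by (intro mult_left_mono) auto
        moreover have "q * v * ((a - e1) * v powr q) \<le> q * v * cc v"
          using cvL v0 q0 by (intro mult_left_mono) auto
        ultimately show ?thesis using hx by linarith
      qed
      also have "\<dots> = a * ((q+1) * (x * v powr q) - q * (v * v powr q) - x * x powr q)
                  + e1 * ((q+1) * (x * v powr q) + q * (v * v powr q) + M * Mq)"
        by (simp add: algebra_simps)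
      also have "\<dots> \<le> a * 0 + e1 * ((q+1) * (M * Mq) + q * (M * Mq) + M * Mq)"
      proof (rule add_mono)
        show "a * ((q+1) * (x * v powr q) - q * (v * v powr q) - x * x powr q) \<le> a * 0"
          using tg a0 by (intro mult_left_mono) auto
        have "(q+1) * (x * v powr q) \<le> (q+1) * (M * Mq)" using P1 q0 by (intro mult_left_mono) auto
        moreover have "q * (v * v powr q) \<le> q * (M * Mq)" using P2 q0 by (intro mult_left_mono) auto
        ultimately show "e1 * ((q+1) * (x * v powr q) + q * (v * v powr q) + M * Mq)
              \<le> e1 * ((q+1) * (M * Mq) + q * (M * Mq) + M * Mq)"
          using e1p by (intro mult_left_mono) auto
      qed
      also have "\<dots> = (e1 * (2*q+2)) * (M * Mq)" by (simp add: algebra_simps)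
      also have "\<dots> \<le> (\<epsilon> * (a/2) * \<eta> powr q) * (M * Mq)"
        using e1b M0 Mq0 by (intro mult_right_mono) auto
      also have "\<dots> = \<epsilon> * M * (a/2 - 0) * (\<eta>*M) powr q"
        unfolding Mq_def by (simp add: powr_mult algebra_simps)
      also have "\<dots> \<le> \<epsilon> * M * cc (\<eta>*M)"
      proof -
        have em: "\<delta>*M \<le> \<eta>*M" "\<eta>*M \<le> M" using de eta M0 by (auto simp: mult_le_cancel_right1)
        have "(a - e1) * (\<eta>*M) powr q \<le> cc (\<eta>*M)"
          using Ut[OF em] unfolding abs_le_iff by (auto simp: algebra_simps)
        moreover have "(a/2) * (\<eta>*M) powr q \<le> (a - e1) * (\<eta>*M) powr q"
          using e1a by (intro mult_right_mono) auto
        ultimately have "(a/2 - 0) * (\<eta>*M) powr q \<le> cc (\<eta>*M)" by simp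
        hence "(\<epsilon> * M) * ((a/2 - 0) * (\<eta>*M) powr q) \<le> (\<epsilon> * M) * cc (\<eta>*M)"
          using ep M0 by (intro mult_left_mono) auto
        thus ?thesis by (simp add: algebra_simps)
      qed
      finally show "(q+1) * cc v * (x - v) - x * cc x + v * cc v \<le> \<epsilon> * M * cc (\<eta>*M)" .
    qed
  qed
qed

end


context edge_cost begin

lemma ratio:
  assumes q: "0 < q" and k: "1 \<le> k" and x: "0 < x" and v: "0 < v"
    and gx: "a/2 * x powr q \<le> cc x" and gv: "cc v \<le> 2*a * v powr q" and lt: "cc x < k * cc v"
  shows "x * (k * cc v - cc x) \<le> (k * (4*k) powr (1/q)) * (v * cc v)"
proof -
  have "a/2 * x powr q < k * (2*a * v powr q)"
    using gx lt mult_left_mono[OF gv, of k] k by linarith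
  hence "x powr q < 4*k * v powr q" using a0 by (simp add: field_simps)
  hence "(x/v) powr q < 4*k" using v by (simp add: powr_divide field_simps)
  hence "((x/v) powr q) powr (1/q) < (4*k) powr (1/q)"
    by (intro powr_less_mono2) (use q in auto)
  hence "x/v < (4*k) powr (1/q)" using q x v by (simp add: powr_powr)
  hence xv: "x \<le> (4*k) powr (1/q) * v" using v by (simp add: field_simps)
  have cv0: "0 \<le> cc v" using nn v by simp
  have "x * (k * cc v - cc x) \<le> x * (k * cc v)" using nn[of x] x by (intro mult_left_mono) auto
  also have "\<dots> \<le> ((4*k) powr (1/q) * v) * (k * cc v)" using xv cv0 k by (intro mult_right_mono) auto
  also have "\<dots> = (k * (4*k) powr (1/q)) * (v * cc v)" by (simp add: algebra_simps)
  finally show ?thesis .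
qed

lemma good_top: assumes "F = at_top"
  shows "\<exists>X>0. \<forall>t\<ge>X. a/2 * t powr q \<le> cc t \<and> cc t \<le> 2*a * t powr q"
proof -
  have h: "0 < a/2" using a0 by simp
  have "eventually (\<lambda>t. 0 < t \<and> \<bar>cc t - a * t powr q\<bar> \<le> a/2 * t powr q) at_top"
    using good_ev[OF h] assms by simp
  then obtain X where X: "\<And>t. X \<le> t \<Longrightarrow> 0 < t \<and> \<bar>cc t - a * t powr q\<bar> \<le> a/2 * t powr q"
    by (auto simp: eventually_at_top_linorder)
  have "\<forall>t\<ge>max X 1. a/2 * t powr q \<le> cc t \<and> cc t \<le> 2*a * t powr q"
  proof (intro allI impI)
    fix t assume "max X 1 \<le> t"
    hence "0 < t \<and> \<bar>cc t - a * t powr q\<bar> \<le> a/2 * t powr q" using X by auto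
    moreover have "0 \<le> a * t powr q" using a0 by simp
    ultimately show "a/2 * t powr q \<le> cc t \<and> cc t \<le> 2*a * t powr q" unfolding abs_le_iff by linarith
  qed
  thus ?thesis by (intro exI[of _ "max X 1"]) auto
qed

lemma good_light: assumes "F = at_right 0"
  shows "\<exists>b>0. \<forall>t. 0 < t \<and> t < b \<longrightarrow> a/2 * t powr q \<le> cc t \<and> cc t \<le> 2*a * t powr q"
proof -
  have h: "0 < a/2" using a0 by simp
  have "eventually (\<lambda>t. 0 < t \<and> \<bar>cc t - a * t powr q\<bar> \<le> a/2 * t powr q) (at_right 0)"
    using good_ev[OF h] assms by simp
  then obtain b where b: "0 < b" "\<And>t. 0 < t \<Longrightarrow> t < b \<Longrightarrow> \<bar>cc t - a * t powr q\<bar> \<le> a/2 * t powr q"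
    by (auto simp: eventually_at_right_field)
  have "\<forall>t. 0 < t \<and> t < b \<longrightarrow> a/2 * t powr q \<le> cc t \<and> cc t \<le> 2*a * t powr q"
  proof (intro allI impI)
    fix t assume "0 < t \<and> t < b"
    hence "\<bar>cc t - a * t powr q\<bar> \<le> a/2 * t powr q" using b by auto
    moreover have "0 \<le> a * t powr q" using a0 by simp
    ultimately show "a/2 * t powr q \<le> cc t \<and> cc t \<le> 2*a * t powr q" unfolding abs_le_iff by linarith
  qed
  thus ?thesis using b(1) by blast
qed

lemma H3: assumes q: "0 < q" and k: "1 \<le> k"
  shows "\<exists>A B. 0 \<le> A \<and> 0 \<le> B \<and> (F = at_right 0 \<longrightarrow> B = 0) \<and>
    eventually (\<lambda>M. \<forall>v x. 0 \<le> v \<and> v \<le> M \<and> 0 \<le> x \<and> x \<le> M \<longrightarrow>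
       x * (k * cc v - cc x) \<le> A * (v * cc v) + B) F"
  using Fc
proof
  assume F: "F = at_top"
  obtain X where X0: "0 < X" and gX: "\<And>t. X \<le> t \<Longrightarrow> a/2 * t powr q \<le> cc t \<and> cc t \<le> 2*a * t powr q"
    using good_top[OF F] by auto
  have "eventually (\<lambda>t. k * cc X < a/2 * t powr q) at_top"
    using pw_top[OF q, of "2 * (k * cc X) / a + 1"]
    by eventually_elim (use a0 in \<open>simp add: field_simps\<close>)
  then obtain X2' where X2': "\<And>t. X2' \<le> t \<Longrightarrow> k * cc X < a/2 * t powr q"
    by (auto simp: eventually_at_top_linorder)
  define X2 where "X2 = max X2' X"
  have X2: "\<And>t. X2 \<le> t \<Longrightarrow> k * cc X < cc t"
    using X2' gX unfolding X2_def by (meson max.boundedE order_less_le_trans)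
  have XX2: "X \<le> X2" unfolding X2_def by simp
  define A where "A = max (X2 * k / X) (k * (4*k) powr (1/q))"
  define B where "B = X2 * k * cc X"
  have cX0: "0 \<le> cc X" using nn X0 by simp
  have A0: "0 \<le> A" unfolding A_def using k by (simp add: max.coboundedI2)
  have B0: "0 \<le> B" unfolding B_def using X0 XX2 k cX0 by simp
  have bound: "x * (k * cc v - cc x) \<le> A * (v * cc v) + B" if v: "0 \<le> v" and x: "0 \<le> x" for v x
  proof -
    have vc: "0 \<le> v * cc v" using nn v by simp
    have cv0: "0 \<le> cc v" using nn v by simp
    have Avc: "0 \<le> A * (v * cc v)" using A0 vc by simp
    show ?thesis
    proof (cases "k * cc v \<le> cc x")
      case True
      hence "x * (k * cc v - cc x) \<le> 0" using x by (simp add: mult_nonneg_nonpos)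
      thus ?thesis using Avc B0 by linarith
    next
      case False
      hence lt: "cc x < k * cc v" by simp
      have base: "x * (k * cc v - cc x) \<le> x * (k * cc v)" using nn[OF x] x by (intro mult_left_mono) auto
      show ?thesis
      proof (cases "v \<le> X")
        case True
        have cvX: "cc v \<le> cc X" using mono'[OF v True] .
        have "cc x < k * cc X" using lt cvX k by (smt (verit) mult_left_mono)
        hence xX2: "x \<le> X2" using X2[of x] by force
        have "x * (k * cc v) \<le> X2 * (k * cc X)"
          using xX2 x cvX k cv0 by (intro mult_mono mult_left_mono) auto
        thus ?thesis using base Avc unfolding B_def by (simp add: algebra_simps)
      next
        case False
        hence vX: "X < v" by simp
        show ?thesis
        proof (cases "x \<le> X2")
          case True
          have "x * (k * cc v) \<le> X2 * (k * cc v)" using True k cv0 by (intro mult_right_mono) auto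
          also have "\<dots> = (X2 * k / X) * (X * cc v)" using X0 by (simp add: field_simps)
          also have "\<dots> \<le> (X2 * k / X) * (v * cc v)"
            using vX cv0 X0 XX2 k by (intro mult_left_mono mult_right_mono) auto
          also have "\<dots> \<le> A * (v * cc v)" unfolding A_def using vc by (intro mult_right_mono) auto
          finally show ?thesis using base B0 by linarith
        next
          case False
          have "x * (k * cc v - cc x) \<le> (k * (4*k) powr (1/q)) * (v * cc v)"
            by (rule ratio[OF q k]) (use False X0 XX2 vX gX[of x] gX[of v] lt in auto)
          also have "\<dots> \<le> A * (v * cc v)" unfolding A_def using vc by (intro mult_right_mono) auto
          finally show ?thesis using B0 by linarith
        qed
      qed
    qed
  qed
  show ?thesis
    by (rule exI[of _ A], rule exI[of _ B]) (use A0 B0 F bound top_ne_right in auto)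
next
  assume F: "F = at_right 0"
  obtain b where b0: "0 < b" and gb: "\<And>t. 0 < t \<Longrightarrow> t < b \<Longrightarrow> a/2 * t powr q \<le> cc t \<and> cc t \<le> 2*a * t powr q"
    using good_light[OF F] by auto
  have c00: "cc 0 = 0" using czero[OF F q] .
  define A where "A = k * (4*k) powr (1/q)"
  have A0: "0 \<le> A" unfolding A_def using k by simp
  have "eventually (\<lambda>M. \<forall>v x. 0 \<le> v \<and> v \<le> M \<and> 0 \<le> x \<and> x \<le> M \<longrightarrow>
       x * (k * cc v - cc x) \<le> A * (v * cc v) + 0) F"
    unfolding F using ev_small'[OF b0]
  proof (rule eventually_mono)
    fix M assume M: "0 < M \<and> M < b"
    show "\<forall>v x. 0 \<le> v \<and> v \<le> M \<and> 0 \<le> x \<and> x \<le> M \<longrightarrow> x * (k * cc v - cc x) \<le> A * (v * cc v) + 0"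
    proof (intro allI impI)
      fix v x assume vx: "0 \<le> v \<and> v \<le> M \<and> 0 \<le> x \<and> x \<le> M"
      have Avc: "0 \<le> A * (v * cc v)" using A0 nn vx by simp
      show "x * (k * cc v - cc x) \<le> A * (v * cc v) + 0"
      proof (cases "k * cc v \<le> cc x")
        case True
        hence "x * (k * cc v - cc x) \<le> 0" using vx by (simp add: mult_nonneg_nonpos)
        thus ?thesis using Avc by linarith
      next
        case False
        show ?thesis
        proof (cases "x = 0")
          case True thus ?thesis using Avc by simp
        next
          case x0: False
          have v0: "v \<noteq> 0"
          proof
            assume "v = 0"
            hence "cc x < 0" using False c00 by simp
            thus False using nn vx by force
          qed
          have "x * (k * cc v - cc x) \<le> A * (v * cc v)"
            unfolding A_def by (rule ratio[OF q k]) (use vx x0 v0 M gb[of x] gb[of v] False in auto)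
          thus ?thesis by simp
        qed
      qed
    qed
  qed
  thus ?thesis using A0 F by (intro exI[of _ A] exI[of _ 0]) auto
qed

lemma H4a: assumes q: "q = 0" and ep: "0 < \<epsilon>"
  shows "\<exists>C. 0 \<le> C \<and> (F = at_right 0 \<longrightarrow> C = 0) \<and>
    eventually (\<lambda>M. \<forall>v x. 0 \<le> v \<and> v \<le> M \<and> 0 \<le> x \<and> x \<le> M \<longrightarrow>
       x * (cc v - cc x) \<le> \<epsilon> * M + C) F"
  using Fc
proof
  assume F: "F = at_top"
  have "eventually (\<lambda>t. a - \<epsilon> < cc t) at_top"
    using order_tendstoD(1)[OF cc_tendsto0[OF q], of "a - \<epsilon>"] ep F by simp
  then obtain X' where X': "\<And>t. X' \<le> t \<Longrightarrow> a - \<epsilon> < cc t" by (auto simp: eventually_at_top_linorder)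
  define X where "X = max X' 0"
  have X0: "0 \<le> X" unfolding X_def by simp
  have bound: "x * (cc v - cc x) \<le> \<epsilon> * M + X * a"
    if vx: "0 \<le> v \<and> v \<le> M \<and> 0 \<le> x \<and> x \<le> M" for v x M
  proof -
    have cva: "cc v \<le> a" using cup[OF F q] vx by simp
    show ?thesis
    proof (cases "X \<le> x")
      case True
      hence "a - \<epsilon> < cc x" using X' unfolding X_def by simp
      hence "x * (cc v - cc x) \<le> x * \<epsilon>" using cva vx by (intro mult_left_mono) auto
      also have "\<dots> \<le> M * \<epsilon>" using vx ep by (intro mult_right_mono) auto
      moreover have "0 \<le> X * a" using X0 a0 by simp
      ultimately show ?thesis by (simp add: mult.commute)
    next
      case False
      have "x * (cc v - cc x) \<le> x * cc v" using nn[of x] vx by (intro mult_left_mono) auto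
      also have "\<dots> \<le> X * a" using False vx cva nn[of v] X0 by (intro mult_mono) auto
      moreover have "0 \<le> \<epsilon> * M" using vx ep by simp
      ultimately show ?thesis by linarith
    qed
  qed
  show ?thesis using X0 a0 bound F top_ne_right by (intro exI[of _ "X * a"]) auto
next
  assume F: "F = at_right 0"
  have "eventually (\<lambda>M. cc M < a + \<epsilon>) F"
    using order_tendstoD(2)[OF cc_tendsto0[OF q], of "a + \<epsilon>"] ep by simp
  hence "eventually (\<lambda>M. \<forall>v x. 0 \<le> v \<and> v \<le> M \<and> 0 \<le> x \<and> x \<le> M \<longrightarrow>
       x * (cc v - cc x) \<le> \<epsilon> * M + 0) F"
  proof (rule eventually_mono)
    fix M assume cM: "cc M < a + \<epsilon>"
    show "\<forall>v x. 0 \<le> v \<and> v \<le> M \<and> 0 \<le> x \<and> x \<le> M \<longrightarrow> x * (cc v - cc x) \<le> \<epsilon> * M + 0"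
    proof (intro allI impI)
      fix v x assume vx: "0 \<le> v \<and> v \<le> M \<and> 0 \<le> x \<and> x \<le> M"
      have "cc v \<le> cc M" using mono' vx by auto
      moreover have "a \<le> cc x" using cdown[OF F q] vx by simp
      ultimately have "x * (cc v - cc x) \<le> x * \<epsilon>" using cM vx by (intro mult_left_mono) auto
      also have "\<dots> \<le> M * \<epsilon>" using vx ep by (intro mult_right_mono) auto
      finally show "x * (cc v - cc x) \<le> \<epsilon> * M + 0" by (simp add: mult.commute)
    qed
  qed
  thus ?thesis using F by (intro exI[of _ 0]) auto
qed

end


locale edge_pair = e1: edge_cost c1 q1 a1 F + e2: edge_cost c2 q2 a2 F
  for c1 q1 a1 c2 q2 a2 F
begin

lemma separation: assumes q: "q1 < q2" and eta: "0 < \<eta>" "\<eta> \<le> 1"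
  shows "eventually (\<lambda>M. \<forall>v v'. \<eta>*M \<le> v \<and> v \<le> M \<and> \<eta>*M \<le> v' \<and> v' \<le> M \<longrightarrow>
     \<not> (\<eta> * c2 v' < c1 v \<and> \<eta> * c1 v < c2 v')) F"
  using e1.Fc
proof
  assume F: "F = at_top"
  define K where "K = 4 * a1 / (a2 * \<eta> * \<eta> powr q2)"
  have r: "0 < q2 - q1" using q by simp
  have e1q: "0 < \<eta> powr q2" using eta by simp
  have l1: "eventually (\<lambda>M. 0 < M \<and> a1/2 * (\<eta>*M) powr q1 \<le> c1 (\<eta>*M) \<and> c1 M \<le> 2*a1 * M powr q1) at_top"
    using e1.LB2[OF eta] F by simp
  have l2: "eventually (\<lambda>M. 0 < M \<and> a2/2 * (\<eta>*M) powr q2 \<le> c2 (\<eta>*M) \<and> c2 M \<le> 2*a2 * M powr q2) at_top"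
    using e2.LB2[OF eta] F by simp
  show ?thesis unfolding F using l1 l2 pw_top[OF r, of K]
  proof eventually_elim
    case (elim M)
    show ?case
    proof (intro allI impI notI)
      fix v v' assume vv: "\<eta>*M \<le> v \<and> v \<le> M \<and> \<eta>*M \<le> v' \<and> v' \<le> M"
        and bad: "\<eta> * c2 v' < c1 v \<and> \<eta> * c1 v < c2 v'"
      have M0: "0 < M" using elim by simp
      have v0: "0 \<le> \<eta>*M" using eta M0 by simp
      have "c1 v \<le> c1 M" using e1.mono' vv v0 by auto
      also have "\<dots> \<le> 2*a1 * M powr q1" using elim by simp
      also have "\<dots> = \<eta> * ((a2/2) * \<eta> powr q2 * K * M powr q1)"
        unfolding K_def using eta e1q e2.a0 by (simp add: field_simps)
      also have "\<dots> \<le> \<eta> * ((a2/2) * \<eta> powr q2 * M powr (q2 - q1) * M powr q1)"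
        using elim eta e1q e2.a0 by (intro mult_left_mono mult_right_mono) auto
      also have "\<dots> = \<eta> * (a2/2 * (\<eta>*M) powr q2)"
        using M0 by (simp add: powr_mult algebra_simps flip: powr_add)
      also have "\<dots> \<le> \<eta> * c2 (\<eta>*M)" using elim eta by (intro mult_left_mono) auto
      also have "\<dots> \<le> \<eta> * c2 v'" using e2.mono' vv v0 eta by (intro mult_left_mono) auto
      finally show False using bad by simp
    qed
  qed
next
  assume F: "F = at_right 0"
  define K where "K = a1 * \<eta> * \<eta> powr q1 / (4 * a2)"
  have r: "0 < q2 - q1" using q by simp
  have e1q: "0 < \<eta> powr q1" using eta by simp
  have K0: "0 < K" unfolding K_def using e1.a0 e2.a0 eta e1q by simp
  have l1: "eventually (\<lambda>M. 0 < M \<and> a1/2 * (\<eta>*M) powr q1 \<le> c1 (\<eta>*M) \<and> c1 M \<le> 2*a1 * M powr q1) (at_right 0)"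
    using e1.LB2[OF eta] F by simp
  have l2: "eventually (\<lambda>M. 0 < M \<and> a2/2 * (\<eta>*M) powr q2 \<le> c2 (\<eta>*M) \<and> c2 M \<le> 2*a2 * M powr q2) (at_right 0)"
    using e2.LB2[OF eta] F by simp
  show ?thesis unfolding F using l1 l2 pw_zero[OF r K0]
  proof eventually_elim
    case (elim M)
    show ?case
    proof (intro allI impI notI)
      fix v v' assume vv: "\<eta>*M \<le> v \<and> v \<le> M \<and> \<eta>*M \<le> v' \<and> v' \<le> M"
        and bad: "\<eta> * c2 v' < c1 v \<and> \<eta> * c1 v < c2 v'"
      have M0: "0 < M" using elim by simp
      have v0: "0 \<le> \<eta>*M" using eta M0 by simp
      have "c2 v' \<le> c2 M" using e2.mono' vv v0 by auto
      also have "\<dots> \<le> 2*a2 * M powr q2" using elim by simp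
      also have "\<dots> = 2*a2 * (M powr (q2 - q1) * M powr q1)"
        using M0 by (simp flip: powr_add)
      also have "\<dots> \<le> 2*a2 * (K * M powr q1)"
        using elim e2.a0 by (intro mult_left_mono mult_right_mono) auto
      also have "\<dots> = \<eta> * (a1/2 * (\<eta>*M) powr q1)"
        unfolding K_def using e2.a0 by (simp add: powr_mult field_simps)
      also have "\<dots> \<le> \<eta> * c1 (\<eta>*M)" using elim eta by (intro mult_left_mono) auto
      also have "\<dots> \<le> \<eta> * c1 v" using e1.mono' vv v0 eta by (intro mult_left_mono) auto
      finally show False using bad by simp
    qed
  qed
qed

lemma H5: assumes q1: "q1 = 0" and q2: "0 < q2" and eta: "0 < \<eta>" "\<eta> \<le> 1" and ep: "0 < \<epsilon>"
  shows "eventually (\<lambda>M. \<forall>x v D. 0 \<le> x \<and> x \<le> M \<and> 0 \<le> v \<and> \<eta> * D \<le> c2 M \<longrightarrow>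
     x * ((q2+1) * min (c1 v) D - c1 x) \<le> \<epsilon> * M * c2 (\<eta>*M)) F"
  using e1.Fc
proof
  assume F: "F = at_top"
  show ?thesis using e2.grow[OF F q2 eta, of "(q2+1) * a1 / \<epsilon>"] ev_pos[OF e1.Fc]
  proof eventually_elim
    case (elim M)
    show ?case
    proof (intro allI impI)
      fix x v D :: real assume h: "0 \<le> x \<and> x \<le> M \<and> 0 \<le> v \<and> \<eta> * D \<le> c2 M"
      have k0: "0 \<le> q2 + 1" using q2 by simp
      have "x * ((q2+1) * min (c1 v) D - c1 x) \<le> x * ((q2+1) * c1 v)"
      proof (rule mult_left_mono)
        have "(q2+1) * min (c1 v) D \<le> (q2+1) * c1 v" using k0 by (intro mult_left_mono) auto
        thus "(q2+1) * min (c1 v) D - c1 x \<le> (q2+1) * c1 v" using e1.nn[of x] h by linarith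
      qed (use h in auto)
      also have "\<dots> \<le> M * ((q2+1) * a1)"
        using h k0 e1.cup[OF F q1] e1.nn[of v] e1.a0 by (intro mult_mono mult_left_mono) auto
      also have "\<dots> = \<epsilon> * M * ((q2+1) * a1 / \<epsilon>)" using ep by simp
      also have "\<dots> \<le> \<epsilon> * M * c2 (\<eta>*M)" using elim ep by (intro mult_left_mono) auto
      finally show "x * ((q2+1) * min (c1 v) D - c1 x) \<le> \<epsilon> * M * c2 (\<eta>*M)" .
    qed
  qed
next
  assume F: "F = at_right 0"
  have K0: "0 < \<eta> * a1 / (q2+1)" using eta e1.a0 q2 by simp
  show ?thesis using e2.shrink[OF F q2 K0] ev_pos[OF e1.Fc]
  proof eventually_elim
    case (elim M)
    show ?case
    proof (intro allI impI)
      fix x v D :: real assume h: "0 \<le> x \<and> x \<le> M \<and> 0 \<le> v \<and> \<eta> * D \<le> c2 M"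
      have "\<eta> * D \<le> \<eta> * (a1 / (q2+1))" using h elim by simp
      hence "D \<le> a1 / (q2+1)" by (rule mult_left_le_imp_le[OF _ eta(1)])
      hence "(q2+1) * D \<le> a1" using q2 by (simp add: field_simps)
      hence "(q2+1) * min (c1 v) D \<le> c1 x"
        using e1.cdown[OF F q1, of x] h q2 by (smt (verit) min.cobounded2 mult_left_mono)
      hence "x * ((q2+1) * min (c1 v) D - c1 x) \<le> 0" using h by (simp add: mult_nonneg_nonpos)
      also have "0 \<le> \<epsilon> * M * c2 (\<eta>*M)" using ep elim eta e2.nn[of "\<eta>*M"] by simp
      finally show "x * ((q2+1) * min (c1 v) D - c1 x) \<le> \<epsilon> * M * c2 (\<eta>*M)" .
    qed
  qed
qed

end


context game begin

lemma social_nonneg: "feasible I Paths m g \<Longrightarrow> 0 \<le> social_cost E P c g"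
  unfolding social_cost_def using load_nonneg cnonneg by (auto intro!: sum_nonneg mult_nonneg_nonneg)

lemma L_diff:
  assumes w: "wardrop I Paths c m f" and g: "feasible I Paths m g" and that: "0 \<le> k"
  shows "social_cost E P c f - (\<Sum>e\<in>E. k * min (c e (load P f e)) (Dmax f) * (load P g e - load P f e)
            - load P g e * c e (load P g e) + load P f e * c e (load P f e))
         \<le> social_cost E P c g"
proof -
  have "0 \<le> k * (\<Sum>e\<in>E. min (c e (load P f e)) (Dmax f) * (load P g e - load P f e))"
    using VI[OF w g] that by simp
  thus ?thesis unfolding social_cost_def
    by (simp add: sum_subtractf sum.distrib sum_distrib_left algebra_simps)
qed

lemma R_le:
  assumes w: "wardrop I Paths c m f" and e: "e \<in> E" and k: "1 \<le> k" and x: "0 \<le> x"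
  shows "k * min (c e (load P f e)) (Dmax f) * (x - load P f e) - x * c e x + load P f e * c e (load P f e)
     \<le> x * (k * min (c e (load P f e)) (Dmax f) - c e x)"
proof (cases "load P f e = 0")
  case True thus ?thesis by (simp add: algebra_simps)
next
  case False
  have feas: "feasible I Paths m f" using w unfolding wardrop_def by auto
  hence "0 < load P f e" using False load_nonneg[OF feas] by (simp add: less_le)
  hence "min (c e (load P f e)) (Dmax f) = c e (load P f e)" using used_edge_le[OF w e] by simp
  moreover have "0 \<le> (k - 1) * (load P f e * c e (load P f e))"
    using k load_nonneg[OF feas] cnonneg[OF e load_nonneg[OF feas]] by simp
  ultimately show ?thesis by (simp add: algebra_simps)
qed

end

locale agame = game E I Paths c for E :: "'e set" and I :: "'i set" and Paths c +
  fixes q a :: "'e \<Rightarrow> real" and F :: "real filter" and lam :: "'i \<Rightarrow> real"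
  assumes Fc: "F = at_top \<or> F = at_right 0"
    and qa: "\<And>e. e \<in> E \<Longrightarrow> 0 \<le> q e" and aa: "\<And>e. e \<in> E \<Longrightarrow> 0 < a e"
    and lima: "\<And>e. e \<in> E \<Longrightarrow> ((\<lambda>x. c e x / x powr q e) \<longlongrightarrow> a e) F"
    and lam0: "\<And>i. i \<in> I \<Longrightarrow> 0 < lam i" and lam1: "sum lam I = 1"
begin

lemma ec: "e \<in> E \<Longrightarrow> edge_cost (c e) (q e) (a e) F"
  by unfold_locales (use Fc cont monoc cnonneg qa aa lima in auto)

lemma ep: "e \<in> E \<Longrightarrow> e' \<in> E \<Longrightarrow> edge_pair (c e) (q e) (a e) (c e') (q e') (a e') F"
  unfolding edge_pair_def using ec by blast

end


context agame begin

lemma det: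
  fixes M \<eta> \<epsilon> \<epsilon>1 lm Asum Bsum :: real and AA BB :: "'e \<Rightarrow> 'e \<Rightarrow> real" and CC :: "'e \<Rightarrow> real"
  assumes M0: "0 < M" and eta: "0 < \<eta>" "\<eta> \<le> 1" and ep: "0 < \<epsilon>"
    and lm: "\<And>i. i \<in> I \<Longrightarrow> lm \<le> lam i" and lm0: "0 < lm" and etal: "real (card E) * \<eta> < lm"
    and AAle: "\<And>e e0. e \<in> E \<Longrightarrow> e0 \<in> E \<Longrightarrow> 0 \<le> AA e e0 \<and> AA e e0 \<le> Asum"
    and BB0: "\<And>e e0. e \<in> E \<Longrightarrow> e0 \<in> E \<Longrightarrow> 0 \<le> BB e e0"
    and CC0: "\<And>e. e \<in> E \<Longrightarrow> 0 \<le> CC e"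
    and Bsum: "Bsum = (\<Sum>e\<in>E. \<Sum>e0\<in>E. BB e e0) + (\<Sum>e\<in>E. CC e)"
    and sep: "\<And>e e' v v'. e \<in> E \<Longrightarrow> e' \<in> E \<Longrightarrow> q e < q e' \<Longrightarrow> \<eta>*M \<le> v \<Longrightarrow> v \<le> M \<Longrightarrow>
                \<eta>*M \<le> v' \<Longrightarrow> v' \<le> M \<Longrightarrow> \<not> (\<eta> * c e' v' < c e v \<and> \<eta> * c e v < c e' v')"
    and h2: "\<And>e v x. e \<in> E \<Longrightarrow> \<eta>*M \<le> v \<Longrightarrow> v \<le> M \<Longrightarrow> 0 \<le> x \<Longrightarrow> x \<le> M \<Longrightarrow>
                (q e+1) * c e v * (x - v) - x * c e x + v * c e v \<le> \<epsilon> * M * c e (\<eta>*M)"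
    and h3: "\<And>e e0 v x. e \<in> E \<Longrightarrow> e0 \<in> E \<Longrightarrow> 0 < q e \<Longrightarrow> 0 \<le> v \<Longrightarrow> v \<le> M \<Longrightarrow> 0 \<le> x \<Longrightarrow> x \<le> M \<Longrightarrow>
                x * ((q e0 + 1) * c e v - c e x) \<le> AA e e0 * (v * c e v) + BB e e0"
    and h4: "\<And>e v x. e \<in> E \<Longrightarrow> q e = 0 \<Longrightarrow> 0 \<le> v \<Longrightarrow> v \<le> M \<Longrightarrow> 0 \<le> x \<Longrightarrow> x \<le> M \<Longrightarrow>
                x * (c e v - c e x) \<le> \<epsilon>1 * M + CC e"
    and h4': "\<And>e0. e0 \<in> E \<Longrightarrow> q e0 = 0 \<Longrightarrow> \<epsilon>1 \<le> \<epsilon> * c e0 (\<eta>*M)"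
    and h7: "\<And>e0. e0 \<in> E \<Longrightarrow> Bsum \<le> \<epsilon> * M * c e0 (\<eta>*M)"
    and h5: "\<And>e e0 x v D. e \<in> E \<Longrightarrow> e0 \<in> E \<Longrightarrow> q e = 0 \<Longrightarrow> 0 < q e0 \<Longrightarrow> 0 \<le> x \<Longrightarrow> x \<le> M \<Longrightarrow>
                0 \<le> v \<Longrightarrow> \<eta> * D \<le> c e0 M \<Longrightarrow>
                x * ((q e0 + 1) * min (c e v) D - c e x) \<le> \<epsilon> * M * c e0 (\<eta>*M)"
    and w: "wardrop I Paths c (\<lambda>i. lam i * M) f" and g: "feasible I Paths (\<lambda>i. lam i * M) g"
  shows "social_cost E P c f - (real (card E) * (Asum * \<eta> + \<epsilon>) + \<epsilon>) * M * Dmax f \<le> social_cost E P c g"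
proof -
  define m where "m = (\<lambda>i. lam i * M)"
  have feas: "feasible I Paths m f" using w unfolding wardrop_def m_def by auto
  have g': "feasible I Paths m g" using g unfolding m_def .
  have w': "wardrop I Paths c m f" using w unfolding m_def .
  have summ: "sum m I = M" unfolding m_def using lam1 by (simp add: sum_distrib_right[symmetric])
  define v where "v = load P f"
  define x where "x = load P g"
  define D where "D = Dmax f"
  have v0: "0 \<le> v e" for e unfolding v_def using load_nonneg[OF feas] .
  have x0: "0 \<le> x e" for e unfolding x_def using load_nonneg[OF g'] .
  have vM: "v e \<le> M" for e unfolding v_def using load_le[OF feas] summ by simp
  have xM: "x e \<le> M" for e unfolding x_def using load_le[OF g'] summ by simp
  have d0: "i \<in> I \<Longrightarrow> 0 \<le> dmin f i" for i using dmin_nonneg[OF feas] .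
  obtain j where j: "j \<in> I" "dmin f j = D" using Dmax_attained[OF neI, of f] unfolding D_def by auto
  have D0: "0 \<le> D" using j d0 by metis
  have Lf: "social_cost E P c f = (\<Sum>i\<in>I. m i * dmin f i)" using eq_cost[OF w'] .
  have mnn: "i \<in> I \<Longrightarrow> 0 \<le> m i" for i unfolding m_def using lam0 M0 by (simp add: less_imp_le)
  have LfD: "lm * M * D \<le> social_cost E P c f"
  proof -
    have "lm * M * D \<le> m j * dmin f j" unfolding m_def using j lm[OF j(1)] M0 D0
      by (simp add: mult_right_mono)
    also have "\<dots> \<le> (\<Sum>i\<in>I. m i * dmin f i)"
      by (rule member_le_sum[OF j(1)]) (use mnn d0 finI in auto)
    finally show ?thesis using Lf by simp
  qed
  have Lg0: "0 \<le> social_cost E P c g" using social_nonneg[OF g'] .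
  have n0: "0 \<le> real (card E)" by simp
  have Asum0: "E \<noteq> {} \<Longrightarrow> 0 \<le> Asum" using AAle by (meson ex_in_conv order_trans)
  show ?thesis
  proof (cases "D = 0")
    case True
    have "social_cost E P c f \<le> 0"
    proof -
      have "(\<Sum>i\<in>I. m i * dmin f i) \<le> (\<Sum>i\<in>I. 0)"
      proof (rule sum_mono)
        fix i assume i: "i \<in> I"
        have "dmin f i \<le> 0" using Dmax_ge[OF i, of f] True unfolding D_def by simp
        thus "m i * dmin f i \<le> 0" using mnn[OF i] by (simp add: mult_nonneg_nonpos)
      qed
      thus ?thesis using Lf by simp
    qed
    thus ?thesis using True Lg0 unfolding D_def by simp
  next
    case False
    hence Dp: "0 < D" using D0 by simp
    define big where "big e \<longleftrightarrow> \<eta> * M * D < v e * c e (v e)" for e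
    have bigv: "0 < v e" if "e \<in> E" "big e" for e
    proof (rule ccontr)
      assume "\<not> 0 < v e" hence "v e = 0" using v0[of e] by simp
      moreover have "0 < \<eta> * M * D" using eta M0 Dp by simp
      ultimately show False using that(2) unfolding big_def by simp
    qed
    have bigc: "c e (v e) \<le> D" if "e \<in> E" "big e" for e
      using used_edge_le[OF w' that(1)] bigv[OF that] unfolding v_def D_def by simp
    have biglow: "\<eta> * M < v e" if "e \<in> E" "big e" for e
    proof -
      have "\<eta> * M * D < v e * D" using that(2) mult_left_mono[OF bigc[OF that] v0[of e]]
        unfolding big_def by linarith
      thus ?thesis using Dp by simp
    qed
    have bigcl: "\<eta> * D < c e (v e)" if "e \<in> E" "big e" for e
    proof -
      have "v e * c e (v e) \<le> M * c e (v e)" using vM[of e] cnonneg[OF that(1) v0[of e]]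
        by (rule mult_right_mono)
      hence "M * (\<eta> * D) < M * c e (v e)" using that(2) unfolding big_def by (simp add: algebra_simps)
      thus ?thesis using M0 by simp
    qed
    obtain e0 where e0: "e0 \<in> E" "big e0"
    proof (rule ccontr)
      assume "\<not> thesis"
      hence sm: "\<forall>e\<in>E. v e * c e (v e) \<le> \<eta> * M * D" using that unfolding big_def by force
      have "social_cost E P c f = (\<Sum>e\<in>E. v e * c e (v e))" unfolding social_cost_def v_def ..
      also have "\<dots> \<le> real (card E) * (\<eta> * M * D)" by (rule sum_bounded_above) (use sm in auto)
      also have "\<dots> = (real (card E) * \<eta>) * (M * D)" by simp
      also have "\<dots> < lm * (M * D)" using etal M0 Dp by (intro mult_strict_right_mono) auto
      finally show False using LfD by (simp add: algebra_simps)
    qed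
    have sameq: "q e = q e0" if e: "e \<in> E" "big e" for e
    proof (rule ccontr)
      assume ne: "q e \<noteq> q e0"
      have a1: "\<eta> * c e0 (v e0) < c e (v e)"
        using mult_left_mono[OF bigc[OF e0], of \<eta>] bigcl[OF e] eta by linarith
      have a2: "\<eta> * c e (v e) < c e0 (v e0)"
        using mult_left_mono[OF bigc[OF e], of \<eta>] bigcl[OF e0] eta by linarith
      show False
      proof (cases "q e < q e0")
        case True
        thus False using sep[OF e(1) e0(1) True, of "v e" "v e0"] biglow[OF e] biglow[OF e0] vM a1 a2
          by auto
      next
        case False
        have lt: "q e0 < q e" using ne False by simp
        show False using sep[OF e0(1) e(1) lt, of "v e0" "v e"] biglow[OF e] biglow[OF e0] vM a1 a2
          by auto
      qed
    qed
    define k where "k = q e0 + 1"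
    have k1: "1 \<le> k" unfolding k_def using qa[OF e0(1)] by simp
    have cm: "c e y \<le> c e z" if "e \<in> E" "0 \<le> y" "y \<le> z" for e y z
      by (rule mono_onD[OF monoc[OF that(1)]]) (use that in auto)
    have cvD: "c e (\<eta>*M) \<le> D" if e: "e \<in> E" "big e" for e
    proof -
      have "c e (\<eta>*M) \<le> c e (v e)" by (rule cm[OF e(1)]) (use eta M0 biglow[OF e] in auto)
      thus ?thesis using bigc[OF e] by simp
    qed
    have ce0D: "c e0 (\<eta>*M) \<le> D" using cvD[OF e0] .
    have e0M: "\<eta> * D \<le> c e0 M"
      using bigcl[OF e0] cm[OF e0(1) v0[of e0] vM[of e0]] by simp
    define R where "R e = k * min (c e (v e)) D * (x e - v e) - x e * c e (x e) + v e * c e (v e)" for e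
    have Rb: "R e \<le> Asum * \<eta> * M * D + \<epsilon> * M * D + BB e e0 + CC e" if e: "e \<in> E" for e
    proof -
      have "0 \<le> Asum" using Asum0 e by auto
      hence nonneg: "0 \<le> Asum * \<eta> * M * D" using eta M0 D0 by simp
      have BBn: "0 \<le> BB e e0" using BB0[OF e e0(1)] .
      have CCn: "0 \<le> CC e" using CC0[OF e] .
      have eMD: "0 \<le> \<epsilon> * M * D" using ep M0 D0 by simp
      show ?thesis
      proof (cases "big e")
        case True
        have "R e = (q e + 1) * c e (v e) * (x e - v e) - x e * c e (x e) + v e * c e (v e)"
          unfolding R_def k_def using sameq[OF e True] bigc[OF e True] by simp
        also have "\<dots> \<le> \<epsilon> * M * c e (\<eta>*M)"
          by (rule h2[OF e]) (use biglow[OF e True] vM x0 xM in \<open>auto simp: less_imp_le\<close>)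
        also have "\<dots> \<le> \<epsilon> * M * D" using cvD[OF e True] ep M0 by (intro mult_left_mono) auto
        finally show ?thesis using nonneg BBn CCn by linarith
      next
        case False
        hence small: "v e * c e (v e) \<le> \<eta> * M * D" unfolding big_def by simp
        have "R e \<le> x e * (k * min (c e (v e)) D - c e (x e))"
          using R_le[OF w' e k1 x0[of e]] unfolding R_def v_def x_def D_def .
        also have "\<dots> \<le> Asum * \<eta> * M * D + \<epsilon> * M * D + BB e e0 + CC e"
        proof (cases "0 < q e")
          case True
          have "k * min (c e (v e)) D \<le> k * c e (v e)" using k1 by (intro mult_left_mono) auto
          hence "x e * (k * min (c e (v e)) D - c e (x e)) \<le> x e * (k * c e (v e) - c e (x e))"
            using x0[of e] by (intro mult_left_mono) auto
          also have "\<dots> \<le> AA e e0 * (v e * c e (v e)) + BB e e0"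
            unfolding k_def by (rule h3[OF e e0(1) True]) (use v0 vM x0 xM in auto)
          also have "\<dots> \<le> Asum * (\<eta> * M * D) + BB e e0"
          proof -
            have "AA e e0 * (v e * c e (v e)) \<le> AA e e0 * (\<eta> * M * D)"
              using small AAle[OF e e0(1)] by (intro mult_left_mono) auto
            also have "\<dots> \<le> Asum * (\<eta> * M * D)"
              using AAle[OF e e0(1)] eta M0 D0 by (intro mult_right_mono) auto
            finally show ?thesis by simp
          qed
          finally show ?thesis using CCn eMD by (simp add: algebra_simps)
        next
          case False
          hence qe: "q e = 0" using qa[OF e] by simp
          show ?thesis
          proof (cases "q e0 = 0")
            case True
            have k1': "k = 1" unfolding k_def using True by simp
            have "x e * (k * min (c e (v e)) D - c e (x e)) \<le> x e * (c e (v e) - c e (x e))"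
              using x0[of e] k1' by (intro mult_left_mono) auto
            also have "\<dots> \<le> \<epsilon>1 * M + CC e" by (rule h4[OF e qe]) (use v0 vM x0 xM in auto)
            also have "\<dots> \<le> (\<epsilon> * c e0 (\<eta>*M)) * M + CC e"
              using h4'[OF e0(1) True] M0 by (simp add: mult_right_mono)
            also have "\<dots> \<le> (\<epsilon> * D) * M + CC e"
              using ce0D ep M0 by (simp add: mult_left_mono mult_right_mono)
            finally show ?thesis using nonneg BBn by (simp add: algebra_simps)
          next
            case False
            hence q0p: "0 < q e0" using qa[OF e0(1)] by simp
            have "x e * (k * min (c e (v e)) D - c e (x e)) \<le> \<epsilon> * M * c e0 (\<eta>*M)"
              unfolding k_def by (rule h5[OF e e0(1) qe q0p]) (use x0 xM v0 e0M in auto)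
            also have "\<dots> \<le> \<epsilon> * M * D" using ce0D ep M0 by (intro mult_left_mono) auto
            finally show ?thesis using nonneg BBn CCn by linarith
          qed
        qed
        finally show ?thesis .
      qed
    qed
    have sumR: "(\<Sum>e\<in>E. R e) \<le> (real (card E) * (Asum * \<eta> + \<epsilon>) + \<epsilon>) * M * D"
    proof -
      have "(\<Sum>e\<in>E. R e) \<le> (\<Sum>e\<in>E. (Asum * \<eta> * M * D + \<epsilon> * M * D) + (BB e e0 + CC e))"
        by (rule sum_mono) (use Rb in \<open>simp add: algebra_simps\<close>)
      also have "\<dots> = real (card E) * (Asum * \<eta> * M * D + \<epsilon> * M * D) + ((\<Sum>e\<in>E. BB e e0) + (\<Sum>e\<in>E. CC e))"
        by (simp add: sum.distrib)
      also have "(\<Sum>e\<in>E. BB e e0) + (\<Sum>e\<in>E. CC e) \<le> Bsum"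
      proof -
        have "(\<Sum>e\<in>E. BB e e0) \<le> (\<Sum>e\<in>E. \<Sum>e0'\<in>E. BB e e0')"
        proof (rule sum_mono)
          fix e assume e: "e \<in> E"
          show "BB e e0 \<le> (\<Sum>e0'\<in>E. BB e e0')"
            by (rule member_le_sum[OF e0(1)]) (use BB0[OF e] finE in auto)
        qed
        thus ?thesis using Bsum by simp
      qed
      also have "Bsum \<le> \<epsilon> * M * D"
      proof -
        have "\<epsilon> * M * c e0 (\<eta>*M) \<le> \<epsilon> * M * D" using ce0D ep M0 by (intro mult_left_mono) auto
        thus ?thesis using h7[OF e0(1)] by linarith
      qed
      finally show ?thesis by (simp add: algebra_simps)
    qed
    have "social_cost E P c f - (\<Sum>e\<in>E. R e) \<le> social_cost E P c g"
      using L_diff[OF w' g', of k] k1 unfolding R_def v_def x_def D_def by simp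
    thus ?thesis using sumR unfolding D_def by linarith
  qed
qed

end


lemma ev_ball2: "finite A \<Longrightarrow> (\<And>x y. x \<in> A \<Longrightarrow> y \<in> A \<Longrightarrow> eventually (\<lambda>M. P M x y) F)
   \<Longrightarrow> eventually (\<lambda>M. \<forall>x\<in>A. \<forall>y\<in>A. P M x y) F"
  by (intro eventually_ball_finite ballI) auto

lemma ev_imp: "(Q \<Longrightarrow> eventually P F) \<Longrightarrow> eventually (\<lambda>M. Q \<longrightarrow> P M) F"
  by (cases Q) auto

context agame begin

lemma Dmax_nonneg: "feasible I Paths m f \<Longrightarrow> 0 \<le> Dmax f"
  using Dmax_attained[OF neI, of f] dmin_nonneg by metis

lemma key: assumes th: "0 < \<theta>"
  shows "eventually (\<lambda>M. \<forall>f g. wardrop I Paths c (\<lambda>i. lam i * M) f \<longrightarrow> feasible I Paths (\<lambda>i. lam i * M) g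
          \<longrightarrow> social_cost E P c f - \<theta> * M * Dmax f \<le> social_cost E P c g) F"
proof -
  define n where "n = real (card E)"
  have n0: "0 \<le> n" unfolding n_def by simp
  define lm where "lm = Min (lam ` I)"
  have lm_le: "i \<in> I \<Longrightarrow> lm \<le> lam i" for i unfolding lm_def using finI by simp
  have lm0: "0 < lm" unfolding lm_def using finI neI lam0 by (subst Min_gr_iff) auto
  define amin where "amin = Min (insert 1 (a ` E))"
  have amin_le: "e \<in> E \<Longrightarrow> amin \<le> a e" for e unfolding amin_def using finE by simp
  have amin0: "0 < amin" unfolding amin_def using finE aa by (subst Min_gr_iff) auto
  have "\<forall>p\<in>E\<times>E. \<exists>AB::real\<times>real. 0 \<le> fst AB \<and> 0 \<le> snd AB \<and> (F = at_right 0 \<longrightarrow> snd AB = 0) \<and>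
     (0 < q (fst p) \<longrightarrow> eventually (\<lambda>M. \<forall>v x. 0 \<le> v \<and> v \<le> M \<and> 0 \<le> x \<and> x \<le> M \<longrightarrow>
       x * ((q (snd p) + 1) * c (fst p) v - c (fst p) x) \<le> fst AB * (v * c (fst p) v) + snd AB) F)"
  proof
    fix p assume p: "p \<in> E \<times> E"
    show "\<exists>AB::real\<times>real. 0 \<le> fst AB \<and> 0 \<le> snd AB \<and> (F = at_right 0 \<longrightarrow> snd AB = 0) \<and>
     (0 < q (fst p) \<longrightarrow> eventually (\<lambda>M. \<forall>v x. 0 \<le> v \<and> v \<le> M \<and> 0 \<le> x \<and> x \<le> M \<longrightarrow>
       x * ((q (snd p) + 1) * c (fst p) v - c (fst p) x) \<le> fst AB * (v * c (fst p) v) + snd AB) F)"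
    proof (cases "0 < q (fst p)")
      case True
      have k: "1 \<le> q (snd p) + 1" using qa p by auto
      have pE: "fst p \<in> E" using p by auto
      obtain A B where "0 \<le> A \<and> 0 \<le> B \<and> (F = at_right 0 \<longrightarrow> B = 0) \<and>
        eventually (\<lambda>M. \<forall>v x. 0 \<le> v \<and> v \<le> M \<and> 0 \<le> x \<and> x \<le> M \<longrightarrow>
         x * ((q (snd p) + 1) * c (fst p) v - c (fst p) x) \<le> A * (v * c (fst p) v) + B) F"
        using edge_cost.H3[OF ec[OF pE] True k] by blast
      thus ?thesis by (intro exI[of _ "(A, B)"]) auto
    next
      case False thus ?thesis by (intro exI[of _ "(0, 0)"]) auto
    qed
  qed
  from bchoice[OF this] obtain AB where AB: "\<forall>p\<in>E\<times>E. 0 \<le> fst (AB p) \<and> 0 \<le> snd (AB p) \<and> (F = at_right 0 \<longrightarrow> snd (AB p) = 0) \<and>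
     (0 < q (fst p) \<longrightarrow> eventually (\<lambda>M. \<forall>v x. 0 \<le> v \<and> v \<le> M \<and> 0 \<le> x \<and> x \<le> M \<longrightarrow>
       x * ((q (snd p) + 1) * c (fst p) v - c (fst p) x) \<le> fst (AB p) * (v * c (fst p) v) + snd (AB p)) F)"
    by blast
  define AA where "AA e e0 = fst (AB (e, e0))" for e e0
  define BB where "BB e e0 = snd (AB (e, e0))" for e e0
  have AA0: "e \<in> E \<Longrightarrow> e0 \<in> E \<Longrightarrow> 0 \<le> AA e e0" for e e0 using AB unfolding AA_def by auto
  have BB0: "e \<in> E \<Longrightarrow> e0 \<in> E \<Longrightarrow> 0 \<le> BB e e0" for e e0 using AB unfolding BB_def by auto
  have BBl: "e \<in> E \<Longrightarrow> e0 \<in> E \<Longrightarrow> F = at_right 0 \<Longrightarrow> BB e e0 = 0" for e e0 using AB unfolding BB_def by auto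
  have h3ev: "e \<in> E \<Longrightarrow> e0 \<in> E \<Longrightarrow> 0 < q e \<Longrightarrow> eventually (\<lambda>M. \<forall>v x. 0 \<le> v \<and> v \<le> M \<and> 0 \<le> x \<and> x \<le> M \<longrightarrow>
       x * ((q e0 + 1) * c e v - c e x) \<le> AA e e0 * (v * c e v) + BB e e0) F" for e e0
    using AB unfolding AA_def BB_def by auto
  define Asum where "Asum = (\<Sum>e\<in>E. \<Sum>e0\<in>E. AA e e0)"
  have AAle: "e \<in> E \<Longrightarrow> e0 \<in> E \<Longrightarrow> 0 \<le> AA e e0 \<and> AA e e0 \<le> Asum" for e e0
  proof -
    assume e: "e \<in> E" and e0: "e0 \<in> E"
    have "AA e e0 \<le> (\<Sum>e0'\<in>E. AA e e0')" by (rule member_le_sum[OF e0]) (use AA0 e finE in auto)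
    also have "\<dots> \<le> Asum" unfolding Asum_def
      by (rule member_le_sum[OF e, of "\<lambda>e. \<Sum>e0'\<in>E. AA e e0'"]) (use AA0 finE in \<open>auto intro: sum_nonneg\<close>)
    finally show ?thesis using AA0[OF e e0] by simp
  qed
  have Asum0: "0 \<le> Asum" unfolding Asum_def using AA0 by (auto intro!: sum_nonneg)
  define \<eta> where "\<eta> = min 1 (min (lm / (2*(n+1))) (\<theta> / (4*(n+1)*(Asum+1))))"
  define \<epsilon> where "\<epsilon> = \<theta> / (4*(n+1))"
  define \<epsilon>1 where "\<epsilon>1 = \<epsilon> * amin / 2"
  have eta0: "0 < \<eta>" unfolding \<eta>_def using lm0 th n0 Asum0 by simp
  have eta1: "\<eta> \<le> 1" unfolding \<eta>_def by simp
  have ep0: "0 < \<epsilon>" unfolding \<epsilon>_def using th n0 by simp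
  have ep10: "0 < \<epsilon>1" unfolding \<epsilon>1_def using ep0 amin0 by simp
  have etal: "n * \<eta> < lm"
  proof -
    have "\<eta> \<le> lm / (2*(n+1))" unfolding \<eta>_def by simp
    hence "n * \<eta> \<le> n * (lm / (2*(n+1)))" using n0 by (rule mult_left_mono)
    also have "\<dots> < lm" using n0 lm0 by (simp add: field_simps add_nonneg_pos)
    finally show ?thesis .
  qed
  have coef: "n * (Asum * \<eta> + \<epsilon>) + \<epsilon> \<le> \<theta>"
  proof -
    have "\<eta> \<le> \<theta> / (4*(n+1)*(Asum+1))" unfolding \<eta>_def by simp
    hence "Asum * \<eta> \<le> Asum * (\<theta> / (4*(n+1)*(Asum+1)))" using Asum0 by (rule mult_left_mono)
    also have "\<dots> = (\<theta> / (4*(n+1))) * (Asum / (Asum+1))"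
      using Asum0 n0 by (simp add: field_simps)
    also have "\<dots> \<le> (\<theta> / (4*(n+1))) * 1"
      using Asum0 n0 th by (intro mult_left_mono) auto
    also have "\<dots> = \<theta> / (4*(n+1))" by simp
    finally have "Asum * \<eta> \<le> \<epsilon>" unfolding \<epsilon>_def .
    hence "n * (Asum * \<eta> + \<epsilon>) \<le> n * (2 * \<epsilon>)" using n0 by (intro mult_left_mono) auto
    moreover have "n * (2 * \<epsilon>) + \<epsilon> \<le> \<theta>"
    proof -
      have "\<epsilon> * (4*(n+1)) = \<theta>" unfolding \<epsilon>_def using n0 by simp
      moreover have "\<epsilon> * (2*n+1) \<le> \<epsilon> * (4*(n+1))" using ep0 n0 by (intro mult_left_mono) auto
      moreover have "n * (2 * \<epsilon>) + \<epsilon> = \<epsilon> * (2*n+1)" by (simp add: algebra_simps)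
      ultimately show ?thesis by linarith
    qed
    ultimately show ?thesis by linarith
  qed
  have "\<forall>e\<in>E. \<exists>C. 0 \<le> C \<and> (F = at_right 0 \<longrightarrow> C = 0) \<and> (q e = 0 \<longrightarrow>
    eventually (\<lambda>M. \<forall>v x. 0 \<le> v \<and> v \<le> M \<and> 0 \<le> x \<and> x \<le> M \<longrightarrow> x * (c e v - c e x) \<le> \<epsilon>1 * M + C) F)"
  proof
    fix e assume e: "e \<in> E"
    show "\<exists>C. 0 \<le> C \<and> (F = at_right 0 \<longrightarrow> C = 0) \<and> (q e = 0 \<longrightarrow>
      eventually (\<lambda>M. \<forall>v x. 0 \<le> v \<and> v \<le> M \<and> 0 \<le> x \<and> x \<le> M \<longrightarrow> x * (c e v - c e x) \<le> \<epsilon>1 * M + C) F)"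
    proof (cases "q e = 0")
      case True thus ?thesis using edge_cost.H4a[OF ec[OF e] True ep10] by blast
    next
      case False thus ?thesis by (intro exI[of _ 0]) auto
    qed
  qed
  from bchoice[OF this] obtain CC where CC: "\<forall>e\<in>E. 0 \<le> CC e \<and> (F = at_right 0 \<longrightarrow> CC e = 0) \<and> (q e = 0 \<longrightarrow>
    eventually (\<lambda>M. \<forall>v x. 0 \<le> v \<and> v \<le> M \<and> 0 \<le> x \<and> x \<le> M \<longrightarrow> x * (c e v - c e x) \<le> \<epsilon>1 * M + CC e) F)"
    by blast
  define Bsum where "Bsum = (\<Sum>e\<in>E. \<Sum>e0\<in>E. BB e e0) + (\<Sum>e\<in>E. CC e)"
  have Bsum0: "0 \<le> Bsum" unfolding Bsum_def using BB0 CC by (auto intro!: add_nonneg_nonneg sum_nonneg)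
  have Bsuml: "F = at_right 0 \<longrightarrow> Bsum = 0" unfolding Bsum_def using BBl CC by auto
  have ev1: "eventually (\<lambda>M. 0 < M) F" using ev_pos[OF Fc] .
  have ev2: "eventually (\<lambda>M. \<forall>e\<in>E. \<forall>e'\<in>E. q e < q e' \<longrightarrow> (\<forall>v v'. \<eta>*M \<le> v \<and> v \<le> M \<and> \<eta>*M \<le> v' \<and> v' \<le> M \<longrightarrow>
     \<not> (\<eta> * c e' v' < c e v \<and> \<eta> * c e v < c e' v'))) F"
    by (rule ev_ball2[OF finE], rule ev_imp, rule edge_pair.separation[OF ep]) (auto intro: eta0 eta1)
  have ev3: "eventually (\<lambda>M. \<forall>e\<in>E. \<forall>v x. \<eta>*M \<le> v \<and> v \<le> M \<and> 0 \<le> x \<and> x \<le> M \<longrightarrow>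
           (q e+1) * c e v * (x - v) - x * c e x + v * c e v \<le> \<epsilon> * M * c e (\<eta>*M)) F"
    by (rule eventually_ball_finite[OF finE], rule ballI, rule edge_cost.H2[OF ec eta0 eta1 ep0])
  have ev4: "eventually (\<lambda>M. \<forall>e\<in>E. \<forall>e0\<in>E. 0 < q e \<longrightarrow> (\<forall>v x. 0 \<le> v \<and> v \<le> M \<and> 0 \<le> x \<and> x \<le> M \<longrightarrow>
       x * ((q e0 + 1) * c e v - c e x) \<le> AA e e0 * (v * c e v) + BB e e0)) F"
    by (rule ev_ball2[OF finE], rule ev_imp, rule h3ev)
  have ev5: "eventually (\<lambda>M. \<forall>e\<in>E. q e = 0 \<longrightarrow> (\<forall>v x. 0 \<le> v \<and> v \<le> M \<and> 0 \<le> x \<and> x \<le> M \<longrightarrow>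
       x * (c e v - c e x) \<le> \<epsilon>1 * M + CC e)) F"
    by (rule eventually_ball_finite[OF finE], rule ballI, rule ev_imp) (use CC in auto)
  have ev6: "eventually (\<lambda>M. \<forall>e0\<in>E. q e0 = 0 \<longrightarrow> a e0 / 2 * (\<eta>*M) powr q e0 \<le> c e0 (\<eta>*M)) F"
  proof (rule eventually_ball_finite[OF finE], rule ballI, rule ev_imp)
    fix e0 assume "e0 \<in> E"
    show "eventually (\<lambda>M. a e0 / 2 * (\<eta>*M) powr q e0 \<le> c e0 (\<eta>*M)) F"
      using edge_cost.LB2[OF ec[OF \<open>e0 \<in> E\<close>] eta0 eta1] by (rule eventually_mono) auto
  qed
  have ev7: "eventually (\<lambda>M. \<forall>e0\<in>E. Bsum \<le> \<epsilon> * M * c e0 (\<eta>*M)) F"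
    by (rule eventually_ball_finite[OF finE], rule ballI, rule edge_cost.absorb[OF ec Bsum0 Bsuml eta0 eta1 ep0])
  have ev8: "eventually (\<lambda>M. \<forall>e\<in>E. \<forall>e0\<in>E. q e = 0 \<longrightarrow> 0 < q e0 \<longrightarrow> (\<forall>x v D. 0 \<le> x \<and> x \<le> M \<and> 0 \<le> v \<and> \<eta> * D \<le> c e0 M \<longrightarrow>
     x * ((q e0+1) * min (c e v) D - c e x) \<le> \<epsilon> * M * c e0 (\<eta>*M))) F"
  proof (rule ev_ball2[OF finE], rule ev_imp)
    fix e e0 assume e: "e \<in> E" "e0 \<in> E" and qe: "q e = 0"
    show "eventually (\<lambda>M. 0 < q e0 \<longrightarrow> (\<forall>x v D. 0 \<le> x \<and> x \<le> M \<and> 0 \<le> v \<and> \<eta> * D \<le> c e0 M \<longrightarrow>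
     x * ((q e0+1) * min (c e v) D - c e x) \<le> \<epsilon> * M * c e0 (\<eta>*M))) F"
      by (rule ev_imp, rule edge_pair.H5[OF ep[OF e] qe _ eta0 eta1 ep0])
  qed
  show ?thesis using ev1 ev2 ev3 ev4 ev5 ev6 ev7 ev8
  proof eventually_elim
    case (elim M)
    show ?case
    proof (intro allI impI)
      fix f g assume w: "wardrop I Paths c (\<lambda>i. lam i * M) f" and g: "feasible I Paths (\<lambda>i. lam i * M) g"
      have M0: "0 < M" using elim by simp
      have "social_cost E P c f - (real (card E) * (Asum * \<eta> + \<epsilon>) + \<epsilon>) * M * Dmax f \<le> social_cost E P c g"
      proof (rule det[OF M0 eta0 eta1 ep0 lm_le lm0 _ AAle BB0 _ Bsum_def _ _ _ _ _ _ _ w g])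
        show "real (card E) * \<eta> < lm" using etal unfolding n_def .
        show "\<And>e. e \<in> E \<Longrightarrow> 0 \<le> CC e" using CC by auto
        show "\<And>e e' v v'. e \<in> E \<Longrightarrow> e' \<in> E \<Longrightarrow> q e < q e' \<Longrightarrow> \<eta>*M \<le> v \<Longrightarrow> v \<le> M \<Longrightarrow>
                \<eta>*M \<le> v' \<Longrightarrow> v' \<le> M \<Longrightarrow> \<not> (\<eta> * c e' v' < c e v \<and> \<eta> * c e v < c e' v')"
          using elim by blast
        show "\<And>e v x. e \<in> E \<Longrightarrow> \<eta>*M \<le> v \<Longrightarrow> v \<le> M \<Longrightarrow> 0 \<le> x \<Longrightarrow> x \<le> M \<Longrightarrow>
                (q e+1) * c e v * (x - v) - x * c e x + v * c e v \<le> \<epsilon> * M * c e (\<eta>*M)"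
          using elim by blast
        show "\<And>e e0 v x. e \<in> E \<Longrightarrow> e0 \<in> E \<Longrightarrow> 0 < q e \<Longrightarrow> 0 \<le> v \<Longrightarrow> v \<le> M \<Longrightarrow> 0 \<le> x \<Longrightarrow> x \<le> M \<Longrightarrow>
                x * ((q e0 + 1) * c e v - c e x) \<le> AA e e0 * (v * c e v) + BB e e0"
          using elim by blast
        show "\<And>e v x. e \<in> E \<Longrightarrow> q e = 0 \<Longrightarrow> 0 \<le> v \<Longrightarrow> v \<le> M \<Longrightarrow> 0 \<le> x \<Longrightarrow> x \<le> M \<Longrightarrow>
                x * (c e v - c e x) \<le> \<epsilon>1 * M + CC e"
          using elim by blast
        show "\<epsilon>1 \<le> \<epsilon> * c e0 (\<eta>*M)" if e0: "e0 \<in> E" "q e0 = 0" for e0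
        proof -
          have "a e0 / 2 * (\<eta>*M) powr q e0 \<le> c e0 (\<eta>*M)" using elim e0 by blast
          hence "a e0 / 2 \<le> c e0 (\<eta>*M)" using e0(2) eta0 M0 by simp
          hence "amin / 2 \<le> c e0 (\<eta>*M)" using amin_le[OF e0(1)] by linarith
          thus ?thesis unfolding \<epsilon>1_def using ep0 mult_left_mono[of "amin/2" "c e0 (\<eta>*M)" \<epsilon>] by simp
        qed
        show "\<And>e0. e0 \<in> E \<Longrightarrow> Bsum \<le> \<epsilon> * M * c e0 (\<eta>*M)" using elim by blast
        show "x * ((q e0 + 1) * min (c e v) D - c e x) \<le> \<epsilon> * M * c e0 (\<eta>*M)"
          if "e \<in> E" "e0 \<in> E" "q e = 0" "0 < q e0" "0 \<le> x" "x \<le> M" "0 \<le> v" "\<eta> * D \<le> c e0 M"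
          for e e0 x v D
        proof -
          have "\<forall>x v D. 0 \<le> x \<and> x \<le> M \<and> 0 \<le> v \<and> \<eta> * D \<le> c e0 M \<longrightarrow>
                  x * ((q e0+1) * min (c e v) D - c e x) \<le> \<epsilon> * M * c e0 (\<eta>*M)"
            using elim(8) that(1-4) by blast
          thus ?thesis using that(5-8) by blast
        qed
      qed
      moreover have "(real (card E) * (Asum * \<eta> + \<epsilon>) + \<epsilon>) * (M * Dmax f) \<le> \<theta> * (M * Dmax f)"
        using coef M0 Dmax_nonneg[of _ f] w unfolding n_def wardrop_def
        by (intro mult_right_mono) (auto intro!: mult_nonneg_nonneg)
      ultimately show "social_cost E P c f - \<theta> * M * Dmax f \<le> social_cost E P c g"
        by (simp add: algebra_simps)
    qed
  qed
qed

end


context agame begin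

lemma final: "((\<lambda>M. PoA E I Paths c (\<lambda>i. lam i * M)) \<longlongrightarrow> 1) F"
proof (rule tendstoI)
  fix \<epsilon>' :: real assume ep: "0 < \<epsilon>'"
  define lm where "lm = Min (lam ` I)"
  have lm_le: "i \<in> I \<Longrightarrow> lm \<le> lam i" for i unfolding lm_def using finI by simp
  have lm0: "0 < lm" unfolding lm_def using finI neI lam0 by (subst Min_gr_iff) auto
  define r where "r = min (1/2) (\<epsilon>'/4)"
  have r0: "0 < r" and r2: "r \<le> 1/2" and r4: "r \<le> \<epsilon>'/4" unfolding r_def using ep by auto
  have th: "0 < lm * r" using lm0 r0 by simp
  show "eventually (\<lambda>M. dist (PoA E I Paths c (\<lambda>i. lam i * M)) 1 < \<epsilon>') F"
    using key[OF th] ev_pos[OF Fc]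
  proof eventually_elim
    case (elim M)
    define m where "m = (\<lambda>i. lam i * M)"
    have M0: "0 < M" using elim by simp
    have m0: "i \<in> I \<Longrightarrow> 0 \<le> m i" for i unfolding m_def using lam0 M0 by (simp add: less_imp_le)
    have ex: "\<exists>f. wardrop I Paths c m f" using wardrop_exists[OF m0] .
    define f where "f = (SOME f. wardrop I Paths c m f)"
    have w: "wardrop I Paths c m f" unfolding f_def using someI_ex[OF ex] .
    have feas: "feasible I Paths m f" using w unfolding wardrop_def by auto
    define Eqv where "Eqv = social_cost E P c f"
    have Eqdef: "Eq E I Paths c m = Eqv" unfolding Eq_def Eqv_def f_def ..
    define S where "S = social_cost E P c ` {g. feasible I Paths m g}"
    have Optdef: "Opt E I Paths c m = Inf S" unfolding Opt_def S_def ..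
    have Sne: "S \<noteq> {}" unfolding S_def using feas by auto
    have Sbdd: "bdd_below S"
    proof (rule bdd_belowI)
      fix s assume "s \<in> S" thus "0 \<le> s" unfolding S_def using social_nonneg by auto
    qed
    have OptEq: "Inf S \<le> Eqv" unfolding Eqv_def S_def
      by (rule cInf_lower) (use feas Sbdd[unfolded S_def] in auto)
    define D where "D = Dmax f"
    have D0: "0 \<le> D" unfolding D_def using Dmax_nonneg[OF feas] .
    have Optlow: "Eqv - lm * r * M * D \<le> Inf S"
    proof (rule cInf_greatest[OF Sne])
      fix s assume "s \<in> S"
      then obtain g where g: "feasible I Paths m g" "s = social_cost E P c g" unfolding S_def by auto
      have "\<forall>f g. wardrop I Paths c m f \<longrightarrow> feasible I Paths m g \<longrightarrow>
          social_cost E P c f - lm * r * M * Dmax f \<le> social_cost E P c g"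
        using elim unfolding m_def by simp
      thus "Eqv - lm * r * M * D \<le> s" using w g unfolding Eqv_def D_def by blast
    qed
    have Opt0: "0 \<le> Inf S"
      by (rule cInf_greatest[OF Sne]) (auto simp: S_def intro: social_nonneg)
    have EqD: "lm * M * D \<le> Eqv"
    proof -
      obtain j where j: "j \<in> I" "dmin f j = D" using Dmax_attained[OF neI, of f] unfolding D_def by auto
      have d0: "i \<in> I \<Longrightarrow> 0 \<le> dmin f i" for i using dmin_nonneg[OF feas] .
      have "lm * M * D \<le> m j * dmin f j" unfolding m_def using j lm_le[OF j(1)] M0 D0
        by (simp add: mult_right_mono)
      also have "\<dots> \<le> (\<Sum>i\<in>I. m i * dmin f i)"
        by (rule member_le_sum[OF j(1)]) (use m0 d0 finI in auto)
      finally show ?thesis using eq_cost[OF w] unfolding Eqv_def by simp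
    qed
    have low: "(1 - r) * Eqv \<le> Inf S"
    proof -
      have "r * (lm * M * D) \<le> r * Eqv" using EqD r0 by (intro mult_left_mono) auto
      thus ?thesis using Optlow by (simp add: algebra_simps)
    qed
    have PoAdef: "PoA E I Paths c m = (if 0 < Inf S then Eqv / Inf S else 1)"
      unfolding PoA_def Optdef Eqdef ..
    show ?case
    proof (cases "Eqv = 0")
      case True
      hence "Inf S = 0" using OptEq Opt0 by simp
      thus ?thesis using PoAdef ep unfolding m_def by simp
    next
      case False
      have "0 \<le> Eqv" unfolding Eqv_def using social_nonneg[OF feas] .
      hence Ep: "0 < Eqv" using False by simp
      have "0 < (1 - r) * Eqv" using Ep r2 by simp
      hence Op: "0 < Inf S" using low by linarith
      have ge1: "1 \<le> Eqv / Inf S" using OptEq Op by simp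
      have "Eqv / Inf S \<le> Eqv / ((1 - r) * Eqv)"
        using low Op Ep r2 by (intro divide_left_mono) auto
      also have "\<dots> = 1 / (1 - r)" using Ep r2 by simp
      also have "\<dots> \<le> 1 + 2 * r"
      proof -
        have "1 \<le> (1 + 2*r) * (1 - r)" using r0 r2 by (simp add: algebra_simps mult_left_mono)
        thus ?thesis using r2 by (simp add: field_simps)
      qed
      finally have "Eqv / Inf S \<le> 1 + 2 * r" .
      hence "dist (Eqv / Inf S) 1 < \<epsilon>'" using ge1 r4 ep by (simp add: dist_real_def)
      thus ?thesis using PoAdef Op unfolding m_def by simp
    qed
  qed
qed

end


theorem corollary5p4:
  fixes E :: "'e set" and src tgt :: "'e \<Rightarrow> 'v"
    and I :: "'i set" and orig dst :: "'i \<Rightarrow> 'v" and Paths :: "'i \<Rightarrow> 'e list set"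
    and c :: "'e \<Rightarrow> real \<Rightarrow> real" and lam :: "'i \<Rightarrow> real" and q :: "'e \<Rightarrow> real"
    and F :: "real filter"
  assumes "F = at_top \<or> F = at_right 0"
    and "finite E" and "finite I"
    and "\<And>i. i \<in> I \<Longrightarrow> finite (Paths i) \<and> Paths i \<noteq> {}"
    and "\<And>i p. i \<in> I \<Longrightarrow> p \<in> Paths i \<Longrightarrow> is_path E src tgt (orig i) (dst i) p"
    and "\<And>i j. i \<in> I \<Longrightarrow> j \<in> I \<Longrightarrow> i \<noteq> j \<Longrightarrow> Paths i \<inter> Paths j = {}"
    and "\<And>e. e \<in> E \<Longrightarrow> continuous_on {0..} (c e)"
    and "\<And>e. e \<in> E \<Longrightarrow> mono_on {0..} (c e)"
    and "\<And>e x. e \<in> E \<Longrightarrow> 0 \<le> x \<Longrightarrow> 0 \<le> c e x"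
    and "\<And>i. i \<in> I \<Longrightarrow> 0 < lam i"
    and "(\<Sum>i\<in>I. lam i) = 1"
    and "\<And>e. e \<in> E \<Longrightarrow> 0 \<le> q e \<and>
           (\<exists>L. L \<noteq> 0 \<and> ((\<lambda>x. c e x / x powr q e) \<longlongrightarrow> L) F)"
  shows "((\<lambda>M. PoA E I Paths c (\<lambda>i. lam i * M)) \<longlongrightarrow> 1) F"
proof -
  have Fc: "F = at_top \<or> F = at_right 0" using assms(1) .
  have neI: "I \<noteq> {}" using assms(11) by auto
  have subE: "\<And>i p. i \<in> I \<Longrightarrow> p \<in> Paths i \<Longrightarrow> set p \<subseteq> E"
    using assms(5) unfolding is_path_def by blast
  have "\<forall>e\<in>E. \<exists>L. L \<noteq> 0 \<and> ((\<lambda>x. c e x / x powr q e) \<longlongrightarrow> L) F" using assms(12) by blast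
  from bchoice[OF this] obtain a where a: "\<forall>e\<in>E. a e \<noteq> 0 \<and> ((\<lambda>x. c e x / x powr q e) \<longlongrightarrow> a e) F"
    by blast
  have Fnb: "F \<noteq> bot" using Fc trivial_limit_at_right_real trivial_limit_at_top_linorder by metis
  have apos: "0 < a e" if e: "e \<in> E" for e
  proof -
    have "eventually (\<lambda>x. 0 \<le> c e x / x powr q e) F"
      using ev_pos[OF Fc] by eventually_elim (use assms(9)[OF e] in auto)
    hence "0 \<le> a e" using tendsto_lowerbound[OF _ _ Fnb] a e by blast
    thus ?thesis using a e by auto
  qed
  interpret agame E I Paths c q a F lam
  proof (unfold_locales)
    show "finite E" by (rule assms(2))
    show "finite I" by (rule assms(3))
    show "I \<noteq> {}" by (rule neI)
  qed (use assms subE a apos in auto)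
  show ?thesis using final .
qed


end
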